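(* Let $\Gamma_0\subset G_0$ be a Schottky group and $u\in Z^1(\Gamma_0,V)$. If there exist $\gamma_1,\gamma_2\in\Gamma_0$ with $\alpha_u(\gamma_1)<0<\alpha_u(\gamma_2)$, then the affine deformation $\Gamma_u$ does not act properly on $\mathsf E$.
   Context: $G_0=\mathrm{PSL}(2,\mathbb R)$; fix $r\ge1$ and let $V=V_r$ be the $(2r+1)$-dimensional irreducible representation of $G_0$ (the $2r$-th symmetric power of the standard representation of $\mathrm{SL}(2,\mathbb R)$), with action $L$ and invariant nondegenerate symmetric bilinear form $B$. For hyperbolic $\gamma\in G_0$, lift to $\tilde\gamma\in\mathrm{SL}(2,\mathbb R)$ with eigenvalues $\lambda,\lambda^{-1}$, $|\lambda|<1$, eigenvectors $v_+$ (for $\lambda$) and $v_-$ (for $\lambda^{-1}$) with $(v_-,v_+)$ positively oriented; the neutral vector $x^0(\gamma)$ is the positive multiple of $v_-^rv_+^r\in V$ with $B(x^0(\gamma),x^0(\gamma))=1$. A Schottky group is a finitely generated nonabelian discrete subgroup of $G_0$ all of whose nontrivial elements are hyperbolic. A cocycle $u\in Z^1(\Gamma_0,V)$ satisfies $u(\gamma_1\gamma_2)=u(\gamma_1)+L(\gamma_1)u(\gamma_2)$. $\mathsf E$ is the affine space modeled on $V$ and $\Gamma_u$ is the group of affine maps $x\mapsto L(\gamma)x+u(\gamma)$, $\gamma\in\Gamma_0$. Margulis invariant: $\alpha_u(\gamma)=B(u(\gamma),x^0(\gamma))$. "Acts properly" means properly discontinuously. *)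

theory Defs
  imports "HOL-Analysis.Analysis" "HOL-Computational_Algebra.Polynomial"
begin

type_synonym mat2 = "real^2^2"
type_synonym Vvec = "nat \<Rightarrow> real"

definition SL2 :: "mat2 set" where
  "SL2 = {g. det g = 1}"

definition hyperbolic :: "mat2 \<Rightarrow> bool" where
  "hyperbolic g \<longleftrightarrow> g \<in> SL2 \<and> \<bar>trace g\<bar> > 2"

text \<open>Subgroup of SL(2,R) generated by S and -I (preimage of the subgroup of PSL(2,R)
 generated by the image of S).\<close>
inductive_set sl_gen :: "mat2 set \<Rightarrow> mat2 set" for S where
  gen_one: "mat 1 \<in> sl_gen S"
| gen_neg: "- mat 1 \<in> sl_gen S"
| gen_base: "s \<in> S \<Longrightarrow> s \<in> sl_gen S"
| gen_mult: "a \<in> sl_gen S \<Longrightarrow> b \<in> sl_gen S \<Longrightarrow> a ** b \<in> sl_gen S"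
| gen_inv: "a \<in> sl_gen S \<Longrightarrow> matrix_inv a \<in> sl_gen S"

text \<open>A subgroup Gamma0 of PSL(2,R) is represented by its full preimage G in SL(2,R).\<close>
definition psl_subgroup :: "mat2 set \<Rightarrow> bool" where
  "psl_subgroup G \<longleftrightarrow> G \<subseteq> SL2 \<and> mat 1 \<in> G \<and> - mat 1 \<in> G \<and>
     (\<forall>a\<in>G. \<forall>b\<in>G. a ** b \<in> G) \<and> (\<forall>a\<in>G. matrix_inv a \<in> G)"

definition schottky :: "mat2 set \<Rightarrow> bool" where
  "schottky G \<longleftrightarrow> psl_subgroup G
     \<and> (\<exists>S. finite S \<and> S \<subseteq> SL2 \<and> G = sl_gen S)
     \<and> (\<exists>a\<in>G. \<exists>b\<in>G. a ** b \<noteq> b ** a \<and> a ** b \<noteq> - (b ** a))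
     \<and> (\<forall>g\<in>G. \<exists>e>0. \<forall>h\<in>G. dist h g < e \<longrightarrow> h = g)
     \<and> (\<forall>g\<in>G. g \<noteq> mat 1 \<and> g \<noteq> - mat 1 \<longrightarrow> hyperbolic g)"

text \<open>A homogeneous polynomial  sum_k c_k e1^k e2^(2r-k)  is encoded by its coefficient
 function c (c k = 0 for k > 2r); as a polynomial in t it is sum_k c_k t^k
 (t stands for e1, 1 for e2). A vector v = v1 e1 + v2 e2 becomes [:v2, v1:].\<close>

definition Vr :: "nat \<Rightarrow> Vvec set" where
  "Vr r = {c. \<forall>k>2*r. c k = 0}"

definition lin :: "real^2 \<Rightarrow> real poly" where
  "lin v = [: v$2, v$1 :]"

definition Lrep :: "nat \<Rightarrow> mat2 \<Rightarrow> Vvec \<Rightarrow> Vvec" where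
  "Lrep r g c = coeff (\<Sum>k\<le>2*r. smult (c k)
      ([: g$2$1, g$1$1 :] ^ k * [: g$2$2, g$1$2 :] ^ (2*r - k)))"

definition sym_prod :: "nat \<Rightarrow> real^2 \<Rightarrow> real^2 \<Rightarrow> Vvec" where
  "sym_prod r vm vp = coeff (lin vm ^ r * lin vp ^ r)"

text \<open>Invariant nondegenerate symmetric bilinear form (normalised so that B(x0,x0) > 0 on
 neutral directions).\<close>
definition Bform :: "nat \<Rightarrow> Vvec \<Rightarrow> Vvec \<Rightarrow> real" where
  "Bform r c d = (-1)^r * (\<Sum>k\<le>2*r. (-1)^k * c k * d (2*r - k) / real (2*r choose k))"

definition is_neutral :: "nat \<Rightarrow> mat2 \<Rightarrow> Vvec \<Rightarrow> bool" where
  "is_neutral r g x \<longleftrightarrow> (\<exists>lam vm vp c.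
      \<bar>lam\<bar> < 1 \<and> vm \<noteq> 0 \<and> vp \<noteq> 0 \<and>
      g *v vp = lam *\<^sub>R vp \<and> g *v vm = (1 / lam) *\<^sub>R vm \<and>
      vm$1 * vp$2 - vm$2 * vp$1 > 0 \<and>
      c > 0 \<and> x = (\<lambda>k. c * sym_prod r vm vp k) \<and> Bform r x x = 1)"

definition neutral :: "nat \<Rightarrow> mat2 \<Rightarrow> Vvec" where
  "neutral r g = (THE x. is_neutral r g x)"

definition margulis :: "nat \<Rightarrow> (mat2 \<Rightarrow> Vvec) \<Rightarrow> mat2 \<Rightarrow> real" where
  "margulis r u g = Bform r (u g) (neutral r g)"

text \<open>u is a function on Gamma0 \<subseteq> PSL(2,R), i.e. on the preimage G, constant on
 fibres {g,-g}.\<close>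
definition cocycle :: "nat \<Rightarrow> mat2 set \<Rightarrow> (mat2 \<Rightarrow> Vvec) \<Rightarrow> bool" where
  "cocycle r G u \<longleftrightarrow> (\<forall>g\<in>G. u g \<in> Vr r \<and> u (- g) = u g) \<and>
     (\<forall>g\<in>G. \<forall>h\<in>G. u (g ** h) = (\<lambda>k. u g k + Lrep r g (u h) k))"

definition aff :: "nat \<Rightarrow> (mat2 \<Rightarrow> Vvec) \<Rightarrow> mat2 \<Rightarrow> Vvec \<Rightarrow> Vvec" where
  "aff r u g x = (\<lambda>k. Lrep r g x k + u g k)"

text \<open>Proper discontinuity of the affine action on E = V_r (compact K \<subseteq> V_r meets only
 finitely many translates; finiteness in the preimage G is equivalent to finiteness in
 Gamma0, as G \<rightarrow> Gamma0 is 2-to-1).\<close>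
definition acts_properly :: "nat \<Rightarrow> mat2 set \<Rightarrow> (mat2 \<Rightarrow> Vvec) \<Rightarrow> bool" where
  "acts_properly r G u \<longleftrightarrow> (\<forall>K. compact K \<and> K \<subseteq> Vr r \<longrightarrow>
      finite {g\<in>G. aff r u g ` K \<inter> K \<noteq> {}})"

end

theory Submission
  imports Defs
begin

definition Gc :: "nat \<Rightarrow> Vvec \<Rightarrow> real \<Rightarrow> real \<Rightarrow> real" where
  "Gc r c y1 y2 = (\<Sum>k\<le>2*r. c k * y1 ^ k * y2 ^ (2*r - k))"

definition Pc :: "nat \<Rightarrow> Vvec \<Rightarrow> real poly" where
  "Pc r c = (\<Sum>k\<le>2*r. monom (c k) k)"

lemma poly_Pc: "poly (Pc r c) t = Gc r c t 1"
  by (simp add: Pc_def Gc_def poly_sum poly_monom)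

lemma coeff_Pc: "coeff (Pc r c) k = (if k \<le> 2*r then c k else 0)"
  by (auto simp: Pc_def coeff_sum coeff_monom)

lemma Vr_eqI_cof:
  assumes c: "c \<in> Vr r" and d: "d \<in> Vr r" and ab: "a \<noteq> 0 \<or> b \<noteq> 0"
    and h: "\<And>t. a + b * t \<noteq> 0 \<Longrightarrow> Gc r c t 1 = Gc r d t 1"
  shows "c = d"
proof -
  let ?p = "Pc r c - Pc r d"
  have fin: "finite {t::real. a + b * t = 0}"
  proof (cases "b = 0")
    case True then show ?thesis using ab by simp
  next
    case False
    have "{t::real. a + b * t = 0} \<subseteq> {- a / b}" using False by (auto simp: field_simps)
    then show ?thesis using finite_subset by blast
  qed
  have "?p = 0"
  proof (rule ccontr)
    assume "?p \<noteq> 0"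
    then have "finite {t. poly ?p t = 0}" by (rule poly_roots_finite)
    moreover have "UNIV \<subseteq> {t. poly ?p t = 0} \<union> {t. a + b * t = 0}"
      using h by (auto simp: poly_Pc)
    ultimately have "finite (UNIV :: real set)" using fin finite_subset by blast
    then show False using infinite_UNIV_char_0 by blast
  qed
  then have "\<And>k. coeff (Pc r c) k = coeff (Pc r d) k" by simp
  then show ?thesis using c d unfolding Vr_def
    by (auto simp: coeff_Pc fun_eq_iff) (metis not_le)
qed

lemma Vr_eqI:
  assumes "c \<in> Vr r" "d \<in> Vr r" "\<And>t. Gc r c t 1 = Gc r d t 1"
  shows "c = d"
  using Vr_eqI_cof[of c r d 1 0] assms by simp

lemma Gc_coeff:
  assumes "degree Q \<le> 2*r"
  shows "Gc r (coeff Q) t 1 = poly Q t"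
proof -
  have "poly Q t = (\<Sum>i\<le>degree Q. coeff Q i * t ^ i)" by (rule poly_altdef)
  also have "\<dots> = (\<Sum>i\<le>2*r. coeff Q i * t ^ i)"
    by (rule sum.mono_neutral_left) (auto simp: assms coeff_eq_0)
  finally show ?thesis by (simp add: Gc_def)
qed

lemma Gc_hom: "Gc r c (s * y1) (s * y2) = s ^ (2*r) * Gc r c y1 y2"
proof -
  have "\<And>k. k \<le> 2*r \<Longrightarrow> c k * (s*y1) ^ k * (s*y2) ^ (2*r - k) = s^(2*r) * (c k * y1 ^ k * y2 ^ (2*r - k))"
  proof -
    fix k assume "k \<le> 2*r"
    then have "s^(2*r) = s^k * s^(2*r-k)" by (simp add: power_add[symmetric])
    then show "c k * (s*y1) ^ k * (s*y2) ^ (2*r - k) = s^(2*r) * (c k * y1 ^ k * y2 ^ (2*r - k))"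
      by (simp add: power_mult_distrib)
  qed
  then show ?thesis unfolding Gc_def sum_distrib_left by (rule sum.cong[OF refl]) simp
qed

lemma Gc_scale:
  assumes "y2 \<noteq> 0"
  shows "Gc r c y1 y2 = y2 ^ (2*r) * Gc r c (y1 / y2) 1"
  using Gc_hom[of r c y2 "y1/y2" 1] assms by simp

lemma Gc_lin: "Gc r (\<lambda>k. a * c k + b * d k) y1 y2 = a * Gc r c y1 y2 + b * Gc r d y1 y2"
  by (simp add: Gc_def sum.distrib sum_distrib_left algebra_simps)

lemma Gc_sum: "finite I \<Longrightarrow> Gc r (\<lambda>k. \<Sum>i\<in>I. f i k) y1 y2 = (\<Sum>i\<in>I. Gc r (f i) y1 y2)"
  by (simp add: Gc_def sum_distrib_right sum.swap[of _ I])

definition QL :: "nat \<Rightarrow> mat2 \<Rightarrow> Vvec \<Rightarrow> real poly" where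
  "QL r g c = (\<Sum>k\<le>2*r. smult (c k) ([: g$2$1, g$1$1 :] ^ k * [: g$2$2, g$1$2 :] ^ (2*r - k)))"

lemma Lrep_QL: "Lrep r g c = coeff (QL r g c)"
  by (simp add: Lrep_def QL_def)

lemma deg_lin2: "degree [:a, b:] \<le> 1"
  by (auto simp: degree_pCons_eq_if)

lemma deg_prod_le:
  assumes "degree p \<le> 1" "degree q \<le> 1" "i \<le> n"
  shows "degree (p ^ i * q ^ (n - i)) \<le> n"
proof -
  have "degree (p ^ i * q ^ (n - i)) \<le> degree (p ^ i) + degree (q ^ (n - i))" by (rule degree_mult_le)
  also have "\<dots> \<le> degree p * i + degree q * (n - i)" using degree_power_le add_mono by blast
  also have "\<dots> \<le> 1 * i + 1 * (n - i)" using assms by (intro add_mono mult_right_mono) auto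
  finally show ?thesis using assms by simp
qed

lemma degree_QL: "degree (QL r g c) \<le> 2*r"
  unfolding QL_def
  by (rule degree_sum_le) (auto intro!: order.trans[OF degree_smult_le] deg_prod_le deg_lin2)

lemma Lrep_Vr: "Lrep r g c \<in> Vr r"
proof -
  have "degree (QL r g c) \<le> 2*r" by (rule degree_QL)
  then show ?thesis unfolding Vr_def Lrep_QL by (auto intro!: coeff_eq_0)
qed

lemma Gc_Lrep: "Gc r (Lrep r g c) t 1 = Gc r c (g$2$1 + g$1$1 * t) (g$2$2 + g$1$2 * t)"
  unfolding Lrep_QL Gc_coeff[OF degree_QL]
  by (simp add: QL_def Gc_def poly_sum mult.assoc ac_simps)

lemma Gc_Lrep_gen:
  assumes "y2 \<noteq> 0"
  shows "Gc r (Lrep r h c) y1 y2 = Gc r c (h$2$1 * y2 + h$1$1 * y1) (h$2$2 * y2 + h$1$2 * y1)"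
proof -
  have "Gc r (Lrep r h c) y1 y2 = y2 ^ (2*r) * Gc r c (h$2$1 + h$1$1 * (y1/y2)) (h$2$2 + h$1$2 * (y1/y2))"
    using Gc_scale[OF assms] Gc_Lrep by simp
  also have "\<dots> = Gc r c (y2 * (h$2$1 + h$1$1 * (y1/y2))) (y2 * (h$2$2 + h$1$2 * (y1/y2)))"
    by (simp add: Gc_hom)
  also have "\<dots> = Gc r c (h$2$1 * y2 + h$1$1 * y1) (h$2$2 * y2 + h$1$2 * y1)"
  proof -
    have "y2 * (h$2$1 + h$1$1 * (y1/y2)) = h$2$1 * y2 + h$1$1 * y1"
      "y2 * (h$2$2 + h$1$2 * (y1/y2)) = h$2$2 * y2 + h$1$2 * y1"
      using assms by (simp_all add: field_simps)
    then show ?thesis by simp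
  qed
  finally show ?thesis .
qed

lemma det2_col_nz: "det (g::mat2) \<noteq> 0 \<Longrightarrow> g$2$2 \<noteq> 0 \<or> g$1$2 \<noteq> 0"
  by (auto simp: det_2)

lemma Lrep_mult:
  assumes "det g \<noteq> 0"
  shows "Lrep r g (Lrep r h c) = Lrep r (g ** h) c"
proof (rule Vr_eqI_cof[OF Lrep_Vr Lrep_Vr det2_col_nz[OF assms]])
  fix t assume t: "g$2$2 + g$1$2 * t \<noteq> 0"
  show "Gc r (Lrep r g (Lrep r h c)) t 1 = Gc r (Lrep r (g ** h) c) t 1"
    unfolding Gc_Lrep Gc_Lrep_gen[OF t]
    by (simp add: matrix_matrix_mult_def sum_2 algebra_simps)
qed

lemma Lrep_id: "c \<in> Vr r \<Longrightarrow> Lrep r (mat 1) c = c"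
  by (rule Vr_eqI[OF Lrep_Vr]) (auto simp: Gc_Lrep mat_def)

lemma Lrep_lin: "Lrep r g (\<lambda>k. a * c k + b * d k) = (\<lambda>k. a * Lrep r g c k + b * Lrep r g d k)"
proof (rule Vr_eqI[OF Lrep_Vr])
  show "(\<lambda>k. a * Lrep r g c k + b * Lrep r g d k) \<in> Vr r"
    using Lrep_Vr[of r g c] Lrep_Vr[of r g d] by (auto simp: Vr_def)
  fix t show "Gc r (Lrep r g (\<lambda>k. a * c k + b * d k)) t 1 = Gc r (\<lambda>k. a * Lrep r g c k + b * Lrep r g d k) t 1"
    by (simp add: Gc_Lrep Gc_lin)
qed

lemma Lrep_add: "Lrep r g (\<lambda>k. c k + d k) = (\<lambda>k. Lrep r g c k + Lrep r g d k)"
  using Lrep_lin[of r g 1 c 1 d] by simp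

lemma Lrep_scale: "Lrep r g (\<lambda>k. a * c k) = (\<lambda>k. a * Lrep r g c k)"
  using Lrep_lin[of r g a c 0 c] by simp

lemma Lrep_diff: "Lrep r g (\<lambda>k. c k - d k) = (\<lambda>k. Lrep r g c k - Lrep r g d k)"
  using Lrep_lin[of r g 1 c "-1" d] by simp

lemma Lrep_zero: "Lrep r g (\<lambda>k. 0) = (\<lambda>k. 0)"
  using Lrep_scale[of r g 0 "\<lambda>k. 0"] by simp

lemma Lrep_sum: "finite I \<Longrightarrow> Lrep r g (\<lambda>k. \<Sum>i\<in>I. f i k) = (\<lambda>k. \<Sum>i\<in>I. Lrep r g (f i) k)"
proof (induction I rule: finite_induct)
  case empty then show ?case by (simp add: Lrep_zero)
next
  case (insert x F)
  then show ?case by (simp add: Lrep_add)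
qed

definition Ev :: "nat \<Rightarrow> nat \<Rightarrow> real^2 \<Rightarrow> real^2 \<Rightarrow> Vvec" where
  "Ev r i v w = coeff (lin v ^ i * lin w ^ (2*r - i))"

lemma degree_Ev: "i \<le> 2*r \<Longrightarrow> degree (lin v ^ i * lin w ^ (2*r - i)) \<le> 2*r"
  unfolding lin_def by (rule deg_prod_le) (auto intro: deg_lin2)

lemma Ev_Vr: "i \<le> 2*r \<Longrightarrow> Ev r i v w \<in> Vr r"
proof -
  assume "i \<le> 2*r"
  then have "degree (lin v ^ i * lin w ^ (2*r - i)) \<le> 2*r" by (rule degree_Ev)
  then show ?thesis unfolding Vr_def Ev_def by (auto intro!: coeff_eq_0)
qed

lemma Gc_Ev: "i \<le> 2*r \<Longrightarrow> Gc r (Ev r i v w) t 1 = (v$2 + v$1 * t) ^ i * (w$2 + w$1 * t) ^ (2*r - i)"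
proof -
  assume "i \<le> 2*r"
  then have "degree (lin v ^ i * lin w ^ (2*r - i)) \<le> 2*r" by (rule degree_Ev)
  then show ?thesis unfolding Ev_def by (simp add: Gc_coeff lin_def ac_simps)
qed

lemma Gc_Ev_gen:
  assumes "i \<le> 2*r" "y2 \<noteq> 0"
  shows "Gc r (Ev r i v w) y1 y2 = (v$1 * y1 + v$2 * y2) ^ i * (w$1 * y1 + w$2 * y2) ^ (2*r - i)"
proof -
  have "Gc r (Ev r i v w) y1 y2 = y2^i * y2^(2*r-i) * ((v$2 + v$1 * (y1/y2)) ^ i * (w$2 + w$1 * (y1/y2)) ^ (2*r - i))"
    using Gc_scale[OF assms(2)] Gc_Ev[OF assms(1)] assms(1) by (simp add: power_add[symmetric])
  also have "\<dots> = (y2 * (v$2 + v$1 * (y1/y2))) ^ i * (y2 * (w$2 + w$1 * (y1/y2))) ^ (2*r - i)"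
    by (simp add: power_mult_distrib)
  also have "\<dots> = (v$1 * y1 + v$2 * y2) ^ i * (w$1 * y1 + w$2 * y2) ^ (2*r - i)"
  proof -
    have "y2 * (v$2 + v$1 * (y1/y2)) = v$1 * y1 + v$2 * y2"
      "y2 * (w$2 + w$1 * (y1/y2)) = w$1 * y1 + w$2 * y2"
      using assms(2) by (simp_all add: field_simps)
    then show ?thesis by simp
  qed
  finally show ?thesis .
qed

lemma Lrep_Ev:
  assumes "det M \<noteq> 0" "i \<le> 2*r"
  shows "Lrep r M (Ev r i v w) = Ev r i (M *v v) (M *v w)"
proof (rule Vr_eqI_cof[OF Lrep_Vr Ev_Vr[OF assms(2)] det2_col_nz[OF assms(1)]])
  fix t assume t: "M$2$2 + M$1$2 * t \<noteq> 0"
  show "Gc r (Lrep r M (Ev r i v w)) t 1 = Gc r (Ev r i (M *v v) (M *v w)) t 1"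
    unfolding Gc_Lrep Gc_Ev_gen[OF assms(2) t] Gc_Ev[OF assms(2)]
    by (simp add: matrix_vector_mult_def sum_2 algebra_simps)
qed

definition colmat :: "real^2 \<Rightarrow> real^2 \<Rightarrow> mat2" where
  "colmat v w = (\<chi> i j. if j = 1 then v$i else w$i)"

definition det2 :: "real^2 \<Rightarrow> real^2 \<Rightarrow> real" where
  "det2 v w = v$1 * w$2 - v$2 * w$1"

definition invm :: "real^2 \<Rightarrow> real^2 \<Rightarrow> mat2" where
  "invm v w = (\<chi> i j. (if i = 1 then (if j = 1 then w$2 else - w$1) else (if j = 1 then - v$2 else v$1)) / det2 v w)"

lemma colmat_simps[simp]: "colmat v w $1$1 = v$1" "colmat v w $2$1 = v$2" "colmat v w $1$2 = w$1" "colmat v w $2$2 = w$2"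
  by (simp_all add: colmat_def)

lemma invm_simps[simp]: "invm v w $1$1 = w$2 / det2 v w" "invm v w $1$2 = - w$1 / det2 v w"
  "invm v w $2$1 = - v$2 / det2 v w" "invm v w $2$2 = v$1 / det2 v w"
  by (simp_all add: invm_def)

lemma mat2_eqI: "(A::mat2)$1$1 = B$1$1 \<Longrightarrow> A$1$2 = B$1$2 \<Longrightarrow> A$2$1 = B$2$1 \<Longrightarrow> A$2$2 = B$2$2 \<Longrightarrow> A = B"
  by (simp add: vec_eq_iff forall_2)

lemma vec2_eqI: "(x::real^2)$1 = y$1 \<Longrightarrow> x$2 = y$2 \<Longrightarrow> x = y"
  by (simp add: vec_eq_iff forall_2)

lemma mult2_simps[simp]: "(A ** (B::mat2))$i$j = A$i$1 * B$1$j + A$i$2 * B$2$j"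
  by (simp add: matrix_matrix_mult_def sum_2)

lemma mv2_simps[simp]: "((A::mat2) *v x)$i = A$i$1 * x$1 + A$i$2 * x$2"
  by (simp add: matrix_vector_mult_def sum_2)

lemma mat1_simps[simp]: "(mat 1::mat2)$1$1 = 1" "(mat 1::mat2)$1$2 = 0" "(mat 1::mat2)$2$1 = 0" "(mat 1::mat2)$2$2 = 1"
  by (simp_all add: mat_def)

lemma colmat_invm: "det2 v w \<noteq> 0 \<Longrightarrow> colmat v w ** invm v w = mat 1"
  apply (rule mat2_eqI)
  apply (simp_all add: field_simps)
  apply (simp_all add: det2_def algebra_simps)
  done

lemma invm_colmat: "det2 v w \<noteq> 0 \<Longrightarrow> invm v w ** colmat v w = mat 1"
  apply (rule mat2_eqI)
  apply (simp_all add: field_simps)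
  apply (simp_all add: det2_def algebra_simps)
  done

lemma det_colmat: "det (colmat v w) = det2 v w"
  by (simp add: det_2 det2_def)

lemma det_invm: "det2 v w \<noteq> 0 \<Longrightarrow> det (invm v w) = 1 / det2 v w"
proof -
  assume D: "det2 v w \<noteq> 0"
  have "det (invm v w) = (v$1 * w$2 - v$2 * w$1) / (det2 v w * det2 v w)"
    by (simp add: det_2 diff_divide_distrib mult.commute)
  also have "\<dots> = 1 / det2 v w" using D by (simp add: det2_def[symmetric])
  finally show ?thesis .
qed

lemma coeff_lin_pow:
  "coeff ([:a, b:] ^ n) k = (if k \<le> n then of_nat (n choose k) * b ^ k * (a::real) ^ (n - k) else 0)"
proof -
  let ?R = "(\<Sum>j\<le>n. monom (of_nat (n choose j) * b ^ j * a ^ (n - j)) j)"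
  have "poly ([:a, b:] ^ n) = poly ?R"
  proof
    fix t
    have "poly ([:a, b:] ^ n) t = (b * t + a) ^ n" by (simp add: algebra_simps)
    also have "\<dots> = (\<Sum>j\<le>n. of_nat (n choose j) * (b*t) ^ j * a ^ (n - j))" by (rule binomial_ring)
    also have "\<dots> = poly ?R t" by (simp add: poly_sum poly_monom power_mult_distrib ac_simps)
    finally show "poly ([:a, b:] ^ n) t = poly ?R t" .
  qed
  then have e: "[:a, b:] ^ n = ?R" by (simp add: poly_eq_poly_eq_iff)
  show ?thesis
  proof (cases "k \<le> n")
    case True then show ?thesis unfolding e by (simp add: coeff_sum_monom)
  next
    case False then show ?thesis unfolding e by (simp add: coeff_sum coeff_monom)
  qed
qed

lemma coeff_lin_pow_top: "coeff ([:a, b:] ^ n) n = (b::real) ^ n"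
  by (simp add: coeff_lin_pow)

lemma Bpow:
  "Bform r c (coeff (lin w ^ (2*r))) = (-1) ^ r * Gc r c (- w$2) (w$1)"
proof -
  have "\<And>k. k \<le> 2*r \<Longrightarrow> (-1) ^ k * c k * coeff (lin w ^ (2*r)) (2*r - k) / real (2*r choose k)
      = c k * (- w$2) ^ k * (w$1) ^ (2*r - k)"
  proof -
    fix k assume k: "k \<le> 2*r"
    have ch: "(2*r choose (2*r - k)) = (2*r choose k)" using k by (rule binomial_symmetric[symmetric])
    have pos: "real (2*r choose k) \<noteq> 0" using k by simp
    have "coeff (lin w ^ (2*r)) (2*r - k) = real (2*r choose k) * w$1 ^ (2*r - k) * w$2 ^ k"
      using k ch by (simp add: lin_def coeff_lin_pow)
    then show "(-1) ^ k * c k * coeff (lin w ^ (2*r)) (2*r - k) / real (2*r choose k)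
      = c k * (- w$2) ^ k * (w$1) ^ (2*r - k)"
      using pos by (simp add: power_minus' field_simps)
  qed
  then have "(\<Sum>k\<le>2*r. (-1) ^ k * c k * coeff (lin w ^ (2*r)) (2*r - k) / real (2*r choose k))
     = (\<Sum>k\<le>2*r. c k * (- w$2) ^ k * (w$1) ^ (2*r - k))" by (intro sum.cong) auto
  then show ?thesis unfolding Bform_def Gc_def by simp
qed

lemma Bform_sum2: "finite J \<Longrightarrow> Bform r c (\<lambda>k. \<Sum>j\<in>J. f j k) = (\<Sum>j\<in>J. Bform r c (f j))"
  by (simp add: Bform_def sum_distrib_left sum_distrib_right sum_divide_distrib sum.swap[of _ J])

lemma Bform_sum1: "finite J \<Longrightarrow> Bform r (\<lambda>k. \<Sum>j\<in>J. f j k) d = (\<Sum>j\<in>J. Bform r (f j) d)"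
  by (simp add: Bform_def sum_distrib_left sum_distrib_right sum_divide_distrib sum.swap[of _ J])

lemma Bform_scale2: "Bform r c (\<lambda>k. a * d k) = a * Bform r c d"
  by (simp add: Bform_def sum_distrib_left algebra_simps)

lemma Bform_scale1: "Bform r (\<lambda>k. a * c k) d = a * Bform r c d"
  by (simp add: Bform_def sum_distrib_left algebra_simps)

lemma lin_add_scale: "lin (v + s *\<^sub>R w) = lin v + smult s (lin w)"
  by (simp add: lin_def)

lemma coeff_pow_expand:
  "coeff ((lin v + smult s (lin w)) ^ (2*r)) = (\<lambda>j. \<Sum>k\<le>2*r. (real (2*r choose k) * s ^ k) * Ev r (2*r - k) v w j)"
proof -
  have "(lin v + smult s (lin w)) ^ (2*r) = (smult s (lin w) + lin v) ^ (2*r)" by (simp add: add.commute)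
  also have "\<dots> = (\<Sum>k\<le>2*r. of_nat (2*r choose k) * smult s (lin w) ^ k * lin v ^ (2*r - k))"
    by (rule binomial_ring)
  also have "\<dots> = (\<Sum>k\<le>2*r. smult (real (2*r choose k) * s ^ k) (lin v ^ (2*r - k) * lin w ^ (2*r - (2*r - k))))"
    by (rule sum.cong) (auto simp: of_nat_poly smult_power ac_simps)
  finally show ?thesis by (simp add: coeff_sum Ev_def fun_eq_iff)
qed

lemma Bform_Ev_r:
  assumes D: "det2 v w \<noteq> 0" and i: "i \<le> 2*r"
  shows "Bform r (Ev r i v w) (Ev r r v w) = (if i = r then det2 v w ^ (2*r) / real (2*r choose r) else 0)"
proof -
  define f where "f k = (if k \<le> 2*r then real (2*r choose k) * Bform r (Ev r i v w) (Ev r (2*r - k) v w) else 0)" for k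
  define g where "g k = (if k = i then (-1) ^ r * (- det2 v w) ^ i * det2 v w ^ (2*r - i) else 0)" for k
  have "f = g"
  proof (rule Vr_eqI_cof[of f r g "v$1" "w$1"])
    show "f \<in> Vr r" by (simp add: f_def Vr_def)
    show "g \<in> Vr r" using i by (simp add: g_def Vr_def)
    show "v$1 \<noteq> 0 \<or> w$1 \<noteq> 0" using D by (auto simp: det2_def)
    fix s assume s: "v$1 + w$1 * s \<noteq> 0"
    have "Gc r f s 1 = (\<Sum>k\<le>2*r. real (2*r choose k) * Bform r (Ev r i v w) (Ev r (2*r - k) v w) * s ^ k)"
      by (simp add: Gc_def f_def)
    also have "\<dots> = Bform r (Ev r i v w) (\<lambda>j. \<Sum>k\<le>2*r. (real (2*r choose k) * s ^ k) * Ev r (2*r - k) v w j)"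
      by (simp add: Bform_sum2 Bform_scale2 ac_simps)
    also have "\<dots> = Bform r (Ev r i v w) (coeff (lin (v + s *\<^sub>R w) ^ (2*r)))"
      by (simp add: lin_add_scale coeff_pow_expand)
    also have "\<dots> = (-1) ^ r * Gc r (Ev r i v w) (- (v + s *\<^sub>R w)$2) ((v + s *\<^sub>R w)$1)"
      by (rule Bpow)
    also have "\<dots> = (-1) ^ r * ((v$1 * (- (v + s *\<^sub>R w)$2) + v$2 * ((v + s *\<^sub>R w)$1)) ^ i *
                   (w$1 * (- (v + s *\<^sub>R w)$2) + w$2 * ((v + s *\<^sub>R w)$1)) ^ (2*r - i))"
      using s i by (subst Gc_Ev_gen) (auto simp: ac_simps)
    also have "\<dots> = (-1) ^ r * ((- det2 v w * s) ^ i * det2 v w ^ (2*r - i))"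
    proof -
      have "v$1 * (- (v + s *\<^sub>R w)$2) + v$2 * ((v + s *\<^sub>R w)$1) = - det2 v w * s"
           "w$1 * (- (v + s *\<^sub>R w)$2) + w$2 * ((v + s *\<^sub>R w)$1) = det2 v w"
        by (simp_all add: det2_def algebra_simps)
      then show ?thesis by simp
    qed
    also have "\<dots> = Gc r g s 1"
    proof -
      have "Gc r g s 1 = (\<Sum>k\<le>2*r. (if k = i then (-1) ^ r * (- det2 v w) ^ i * det2 v w ^ (2*r - i) * s ^ k else 0))"
        unfolding Gc_def g_def by (rule sum.cong) auto
      also have "\<dots> = (-1) ^ r * (- det2 v w) ^ i * det2 v w ^ (2*r - i) * s ^ i"
        using i by (simp add: sum.delta)
      finally show ?thesis by (simp add: power_mult_distrib[symmetric])
    qed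
    finally show "Gc r f s 1 = Gc r g s 1" .
  qed
  then have "f r = g r" by simp
  moreover have "real (2*r choose r) \<noteq> 0" by simp
  ultimately show ?thesis
    by (auto simp: f_def g_def field_simps power_add[symmetric] mult_2 mult_2_right power_minus' split: if_splits)
qed

definition eigd :: "mat2 \<Rightarrow> real \<Rightarrow> real^2 \<Rightarrow> real^2 \<Rightarrow> bool" where
  "eigd g l vm vp \<longleftrightarrow> 0 < \<bar>l\<bar> \<and> \<bar>l\<bar> < 1 \<and> g *v vp = l *\<^sub>R vp \<and> g *v vm = (1/l) *\<^sub>R vm \<and> det2 vm vp > 0"

lemma det2_par: "det2 x y = 0 \<Longrightarrow> y \<noteq> 0 \<Longrightarrow> \<exists>c. x = c *\<^sub>R y"
proof -
  assume d: "det2 x y = 0" and y: "y \<noteq> 0"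
  show ?thesis
  proof (cases "y$1 = 0")
    case False
    have "x = (x$1 / y$1) *\<^sub>R y"
      using d False by (intro vec2_eqI) (auto simp: det2_def field_simps)
    then show ?thesis by blast
  next
    case True
    then have "y$2 \<noteq> 0" using y by (auto simp: vec_eq_iff forall_2)
    then have "x = (x$2 / y$2) *\<^sub>R y"
      using d True by (intro vec2_eqI) (auto simp: det2_def field_simps)
    then show ?thesis by blast
  qed
qed

lemma decomp2:
  assumes "det2 x y \<noteq> 0"
  shows "v = (det2 v y / det2 x y) *\<^sub>R x + (det2 x v / det2 x y) *\<^sub>R y"
proof -
  have 1: "det2 v y * x$1 + det2 x v * y$1 = v$1 * det2 x y"
   and 2: "det2 v y * x$2 + det2 x v * y$2 = v$2 * det2 x y" by (simp_all add: det2_def algebra_simps)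
  show ?thesis
  proof (rule vec2_eqI)
    show "v $ 1 = ((det2 v y / det2 x y) *\<^sub>R x + (det2 x v / det2 x y) *\<^sub>R y) $ 1"
      using 1 assms by (simp add: field_simps)
    show "v $ 2 = ((det2 v y / det2 x y) *\<^sub>R x + (det2 x v / det2 x y) *\<^sub>R y) $ 2"
      using 2 assms by (simp add: field_simps)
  qed
qed

lemma det2_comb_l: "det2 (p *\<^sub>R x + q *\<^sub>R y) y = p * det2 x y"
  by (simp add: det2_def algebra_simps)

lemma det2_comb_r: "det2 x (p *\<^sub>R x + q *\<^sub>R y) = q * det2 x y"
  by (simp add: det2_def algebra_simps)

lemma det2_mv: "det2 (g *v x) (g *v y) = det g * det2 x y"
  by (simp add: det2_def det_2 algebra_simps)

lemma mv_comb: "(g::mat2) *v (p *\<^sub>R x + q *\<^sub>R y) = p *\<^sub>R (g *v x) + q *\<^sub>R (g *v y)"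
  by (rule vec2_eqI) (simp_all add: algebra_simps)

lemma eig_unique:
  assumes e: "eigd g l vm vp" and v: "g *v v = \<mu> *\<^sub>R v" "v \<noteq> 0"
  shows "(\<mu> = l \<and> (\<exists>b. v = b *\<^sub>R vp)) \<or> (\<mu> = 1/l \<and> (\<exists>a. v = a *\<^sub>R vm))"
proof -
  define D where "D = det2 vm vp"
  have D: "D > 0" using e by (simp add: eigd_def D_def)
  define a where "a = det2 v vp / D"
  define b where "b = det2 vm v / D"
  have D0: "det2 vm vp \<noteq> 0" using D D_def by simp
  have vd: "v = a *\<^sub>R vm + b *\<^sub>R vp" unfolding a_def b_def D_def by (rule decomp2[OF D0])
  have ev: "g *v vp = l *\<^sub>R vp" "g *v vm = (1/l) *\<^sub>R vm" using e by (simp_all add: eigd_def)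
  have "g *v v = a *\<^sub>R (g *v vm) + b *\<^sub>R (g *v vp)"
    by (subst vd, rule mv_comb)
  then have gv: "g *v v = (a / l) *\<^sub>R vm + (b * l) *\<^sub>R vp"
    unfolding ev by simp
  have eq: "(a / l) *\<^sub>R vm + (b * l) *\<^sub>R vp = (\<mu> * a) *\<^sub>R vm + (\<mu> * b) *\<^sub>R vp"
  proof -
    have "\<mu> *\<^sub>R v = (\<mu> * a) *\<^sub>R vm + (\<mu> * b) *\<^sub>R vp"
      by (subst vd) (simp only: scaleR_add_right scaleR_scaleR)
    then show ?thesis using v(1) gv by simp
  qed
  have 1: "a / l * D = \<mu> * a * D"
    using arg_cong[OF eq, of "\<lambda>z. det2 z vp"] by (simp only: det2_comb_l D_def)
  have 2: "b * l * D = \<mu> * b * D"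
    using arg_cong[OF eq, of "\<lambda>z. det2 vm z"] by (simp only: det2_comb_r D_def)
  have "(a / l) * D = (\<mu> * a) * D" using 1 by simp
  then have "a / l = \<mu> * a" using mult_right_cancel[of D "a / l" "\<mu> * a"] D by linarith
  then have 1: "a * (1/l - \<mu>) = 0" by (simp add: right_diff_distrib)
  have "(b * l) * D = (\<mu> * b) * D" using 2 by simp
  then have "b * l = \<mu> * b" using mult_right_cancel[of D "b * l" "\<mu> * b"] D by linarith
  then have 2: "b * (l - \<mu>) = 0" by (simp add: right_diff_distrib)
  have ll: "l \<noteq> 1/l"
  proof
    assume "l = 1/l"
    then have "l * l = 1" using e by (auto simp: eigd_def field_simps)
    then have "\<bar>l\<bar> * \<bar>l\<bar> = 1" by (simp add: abs_mult[symmetric])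
    moreover have "\<bar>l\<bar> * \<bar>l\<bar> < \<bar>l\<bar> * 1" using e unfolding eigd_def
      by (intro mult_strict_left_mono) auto
    moreover have "\<bar>l\<bar> < 1" using e by (simp add: eigd_def)
    ultimately show False by simp
  qed
  show ?thesis
  proof (cases "a = 0")
    case True
    then have "b \<noteq> 0" using vd v(2) by auto
    then have "\<mu> = l" using 2 by simp
    then show ?thesis using vd True by auto
  next
    case False
    then have m: "\<mu> = 1/l" using 1 by simp
    then have "b = 0" using 2 ll by simp
    then show ?thesis using vd m by auto
  qed
qed

lemma lin_scale: "lin (a *\<^sub>R v) = smult a (lin v)"
  by (simp add: lin_def)

lemma Ev_scale: "Ev r i (a *\<^sub>R v) (b *\<^sub>R w) = (\<lambda>k. (a ^ i * b ^ (2*r - i)) * Ev r i v w k)"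
  by (simp add: Ev_def lin_scale smult_power fun_eq_iff)

lemma sym_prod_Ev: "sym_prod r vm vp = Ev r r vm vp"
  by (simp add: sym_prod_def Ev_def mult_2)

lemma BEE_pos:
  assumes "det2 vm vp \<noteq> 0"
  shows "Bform r (Ev r r vm vp) (Ev r r vm vp) > 0"
proof -
  have "Bform r (Ev r r vm vp) (Ev r r vm vp) = det2 vm vp ^ (2*r) / real (2*r choose r)"
    using Bform_Ev_r[OF assms, of r r] by simp
  moreover have "det2 vm vp ^ (2*r) > 0" using assms by (simp add: power_mult zero_less_power2)
  ultimately show ?thesis by simp
qed

lemma neutral_char:
  assumes e: "eigd g l vm vp"
  shows "neutral r g = (\<lambda>k. (1 / sqrt (Bform r (Ev r r vm vp) (Ev r r vm vp))) * Ev r r vm vp k)"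
proof -
  define E where "E = Ev r r vm vp"
  define \<beta> where "\<beta> = Bform r E E"
  have D: "det2 vm vp > 0" using e by (simp add: eigd_def)
  have bpos: "\<beta> > 0" unfolding \<beta>_def E_def using D by (intro BEE_pos) simp
  define \<kappa> where "\<kappa> = 1 / sqrt \<beta>"
  have kpos: "\<kappa> > 0" using bpos by (simp add: \<kappa>_def)
  have kk: "\<kappa> * \<kappa> * \<beta> = 1" using bpos by (simp add: \<kappa>_def)
  have "is_neutral r g x \<longleftrightarrow> x = (\<lambda>k. \<kappa> * E k)" for x
  proof
    assume "x = (\<lambda>k. \<kappa> * E k)"
    moreover have "vm \<noteq> 0" "vp \<noteq> 0" using D by (auto simp: det2_def)
    ultimately show "is_neutral r g x"
      unfolding is_neutral_def using e kpos kk
      by (intro exI[of _ l] exI[of _ vm] exI[of _ vp] exI[of _ \<kappa>])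
         (auto simp: eigd_def det2_def sym_prod_Ev E_def \<beta>_def Bform_scale1 Bform_scale2)
  next
    assume "is_neutral r g x"
    then obtain lam vm' vp' c where h: "\<bar>lam\<bar> < 1" "vm' \<noteq> 0" "vp' \<noteq> 0"
      "g *v vp' = lam *\<^sub>R vp'" "g *v vm' = (1 / lam) *\<^sub>R vm'"
      "vm'$1 * vp'$2 - vm'$2 * vp'$1 > 0" "c > 0" "x = (\<lambda>k. c * sym_prod r vm' vp' k)" "Bform r x x = 1"
      unfolding is_neutral_def by blast
    have l1: "\<bar>1/l\<bar> > 1" using e by (simp add: eigd_def)
    from eig_unique[OF e h(4) h(3)] l1 h(1) obtain b where b: "lam = l" "vp' = b *\<^sub>R vp"
      by auto
    have "1/l \<noteq> l"
    proof
      assume "1/l = l"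
      then have "\<bar>1/l\<bar> = \<bar>l\<bar>" by simp
      then show False using l1 e by (simp add: eigd_def)
    qed
    with eig_unique[OF e _ h(2), of "1/lam"] h(5) b obtain a where a: "vm' = a *\<^sub>R vm"
      by auto
    have "det2 vm' vp' = a * b * det2 vm vp" using a b by (simp add: det2_def algebra_simps)
    then have "0 < (a * b) * det2 vm vp" using h(6) by (simp add: det2_def)
    then have ab: "a * b > 0" using D by (metis zero_less_mult_pos2)
    define q where "q = c * (a * b) ^ r"
    have x: "x = (\<lambda>k. q * E k)"
      using h(8) a b by (simp add: q_def sym_prod_Ev Ev_scale E_def power_mult_distrib mult_2 fun_eq_iff ac_simps)
    have qpos: "q > 0" using h(7) ab by (simp add: q_def)
    have "Bform r x x = q * (q * \<beta>)" unfolding x Bform_scale1 Bform_scale2 \<beta>_def ..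
    then have "q * q * \<beta> = 1" using h(9) by simp
    then have "q * q * \<beta> = \<kappa> * \<kappa> * \<beta>" using kk by simp
    then have "q * q = \<kappa> * \<kappa>" using bpos by simp
    then have "(q - \<kappa>) * (q + \<kappa>) = 0" by (simp add: algebra_simps)
    then have "q = \<kappa>" using qpos kpos by simp
    then show "x = (\<lambda>k. \<kappa> * E k)" using x q_def by simp
  qed
  then have "neutral r g = (\<lambda>k. \<kappa> * E k)" unfolding neutral_def by (intro the_equality) auto
  then show ?thesis by (simp add: \<kappa>_def \<beta>_def E_def)
qed

definition crd :: "nat \<Rightarrow> real^2 \<Rightarrow> real^2 \<Rightarrow> Vvec \<Rightarrow> Vvec" where
  "crd r v w x = Lrep r (invm v w) x"

definition dg :: "real \<Rightarrow> mat2" where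
  "dg l = (\<chi> i j. if i = j then (if i = 1 then 1/l else l) else 0)"

definition mu :: "nat \<Rightarrow> real \<Rightarrow> nat \<Rightarrow> real" where
  "mu r l k = (1/l) ^ k * l ^ (2*r - k)"

lemma dg_simps[simp]: "dg l $1$1 = 1/l" "dg l $1$2 = 0" "dg l $2$1 = 0" "dg l $2$2 = l"
  by (simp_all add: dg_def)

lemma crd_Vr: "crd r v w x \<in> Vr r"
  by (simp add: crd_def Lrep_Vr)

lemma det_invm_nz: "det2 v w \<noteq> 0 \<Longrightarrow> det (invm v w) \<noteq> 0"
  by (simp add: det_invm)

lemma Lrep_colmat_crd:
  assumes "det2 v w \<noteq> 0" "x \<in> Vr r"
  shows "Lrep r (colmat v w) (crd r v w x) = x"
  unfolding crd_def using assms
  by (simp add: Lrep_mult det_colmat colmat_invm Lrep_id)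

lemma crd_Lrep_colmat:
  assumes "det2 v w \<noteq> 0" "z \<in> Vr r"
  shows "crd r v w (Lrep r (colmat v w) z) = z"
  unfolding crd_def using assms
  by (simp add: Lrep_mult det_invm_nz invm_colmat Lrep_id)

lemma Vr_sum: "finite I \<Longrightarrow> (\<And>i. i \<in> I \<Longrightarrow> f i \<in> Vr r) \<Longrightarrow> (\<lambda>k. \<Sum>i\<in>I. f i k) \<in> Vr r"
  by (auto simp: Vr_def intro!: sum.neutral)

lemma Vr_scale: "c \<in> Vr r \<Longrightarrow> (\<lambda>k. a * c k) \<in> Vr r"
  by (auto simp: Vr_def)

lemma Vr_lin: "c \<in> Vr r \<Longrightarrow> d \<in> Vr r \<Longrightarrow> (\<lambda>k. a * c k + b * d k) \<in> Vr r"
  by (auto simp: Vr_def)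

lemma Vr_add: "c \<in> Vr r \<Longrightarrow> d \<in> Vr r \<Longrightarrow> (\<lambda>k. c k + d k) \<in> Vr r"
  by (auto simp: Vr_def)

lemma Vr_diff: "c \<in> Vr r \<Longrightarrow> d \<in> Vr r \<Longrightarrow> (\<lambda>k. c k - d k) \<in> Vr r"
  by (auto simp: Vr_def)

lemma Gc_scale1: "Gc r (\<lambda>k. a * c k) y1 y2 = a * Gc r c y1 y2"
  using Gc_lin[of r a c 0 c] by simp

lemma Lrep_colmat: "Lrep r (colmat v w) z = (\<lambda>k. \<Sum>i\<le>2*r. z i * Ev r i v w k)"
proof (rule Vr_eqI[OF Lrep_Vr])
  show "(\<lambda>k. \<Sum>i\<le>2*r. z i * Ev r i v w k) \<in> Vr r"
    by (intro Vr_sum Vr_scale Ev_Vr) auto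
  fix t
  have "Gc r (\<lambda>k. \<Sum>i\<le>2*r. z i * Ev r i v w k) t 1 = (\<Sum>i\<le>2*r. Gc r (\<lambda>k. z i * Ev r i v w k) t 1)"
    by (rule Gc_sum) simp
  also have "\<dots> = (\<Sum>i\<le>2*r. z i * ((v$2 + v$1 * t) ^ i * (w$2 + w$1 * t) ^ (2*r - i)))"
    by (intro sum.cong refl) (simp add: Gc_scale1 Gc_Ev)
  moreover have "Gc r (Lrep r (colmat v w) z) t 1 = (\<Sum>i\<le>2*r. z i * ((v$2 + v$1 * t) ^ i * (w$2 + w$1 * t) ^ (2*r - i)))"
    unfolding Gc_Lrep by (simp add: Gc_def mult.assoc)
  ultimately show "Gc r (Lrep r (colmat v w) z) t 1 = Gc r (\<lambda>k. \<Sum>i\<le>2*r. z i * Ev r i v w k) t 1"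
    by simp
qed

lemma margulis_eq:
  assumes e: "eigd g l vm vp" and ug: "u g \<in> Vr r"
  shows "margulis r u g = sqrt (Bform r (Ev r r vm vp) (Ev r r vm vp)) * crd r vm vp (u g) r"
proof -
  define E where "E = Ev r r vm vp"
  define \<beta> where "\<beta> = Bform r E E"
  define z where "z = crd r vm vp (u g)"
  have D: "det2 vm vp \<noteq> 0" using e by (simp add: eigd_def)
  have bpos: "\<beta> > 0" unfolding \<beta>_def E_def using D by (rule BEE_pos)
  have BE: "\<beta> = det2 vm vp ^ (2*r) / real (2*r choose r)"
    unfolding \<beta>_def E_def using Bform_Ev_r[OF D, of r r] by simp
  have ugd: "u g = (\<lambda>k. \<Sum>i\<le>2*r. z i * Ev r i vm vp k)"
    using Lrep_colmat_crd[OF D ug] by (simp add: Lrep_colmat z_def)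
  have "margulis r u g = Bform r (u g) (\<lambda>k. (1 / sqrt \<beta>) * E k)"
    unfolding margulis_def neutral_char[OF e] E_def \<beta>_def ..
  also have "\<dots> = (1 / sqrt \<beta>) * (\<Sum>i\<le>2*r. z i * Bform r (Ev r i vm vp) E)"
    unfolding Bform_scale2 by (subst ugd) (simp add: Bform_sum1 Bform_scale1)
  also have "(\<Sum>i\<le>2*r. z i * Bform r (Ev r i vm vp) E) = (\<Sum>i\<le>2*r. if i = r then z i * \<beta> else 0)"
    by (intro sum.cong refl) (auto simp: E_def Bform_Ev_r[OF D] BE)
  also have "\<dots> = z r * \<beta>" by (simp add: sum.delta)
  finally have "margulis r u g = z r * \<beta> / sqrt \<beta>" by simp
  also have "\<dots> = sqrt \<beta> * z r" using bpos by (simp add: field_simps real_div_sqrt)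
  finally show ?thesis by (simp add: z_def \<beta>_def E_def)
qed

lemma Lrep_dg: "z \<in> Vr r \<Longrightarrow> Lrep r (dg l) z = (\<lambda>k. mu r l k * z k)"
proof (rule Vr_eqI[OF Lrep_Vr])
  assume z: "z \<in> Vr r"
  then show "(\<lambda>k. mu r l k * z k) \<in> Vr r" by (auto simp: Vr_def)
  fix t
  show "Gc r (Lrep r (dg l) z) t 1 = Gc r (\<lambda>k. mu r l k * z k) t 1"
    unfolding Gc_Lrep by (simp add: Gc_def mu_def power_divide ac_simps)
qed

lemma eig_mat:
  assumes e: "eigd g l vm vp"
  shows "invm vm vp ** g = dg l ** invm vm vp"
proof -
  have D: "det2 vm vp \<noteq> 0" using e by (simp add: eigd_def)
  have ev: "g *v vp = l *\<^sub>R vp" "g *v vm = (1/l) *\<^sub>R vm" using e by (simp_all add: eigd_def)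
  have c1: "vm$1 * g$i$1 + vm$2 * g$i$2 = vm$i / l" for i
    using arg_cong[OF ev(2), of "\<lambda>x. x$i"] by (simp add: mult.commute)
  have c2: "vp$1 * g$i$1 + vp$2 * g$i$2 = l * vp$i" for i
    using arg_cong[OF ev(1), of "\<lambda>x. x$i"] by (simp add: mult.commute)
  have gc: "g ** colmat vm vp = colmat vm vp ** dg l"
    apply (rule mat2_eqI)
    using c1[of 1] c1[of 2] c2[of 1] c2[of 2] by (simp_all add: mult.commute)
  have "invm vm vp ** g = invm vm vp ** g ** (colmat vm vp ** invm vm vp)"
    using D by (simp add: colmat_invm)
  also have "\<dots> = invm vm vp ** (g ** colmat vm vp) ** invm vm vp"
    by (simp add: matrix_mul_assoc)
  also have "\<dots> = (invm vm vp ** colmat vm vp) ** dg l ** invm vm vp"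
    unfolding gc by (simp add: matrix_mul_assoc)
  also have "\<dots> = dg l ** invm vm vp" using D by (simp add: invm_colmat)
  finally show ?thesis .
qed

lemma crd_Lrep:
  assumes e: "eigd g l vm vp"
  shows "crd r vm vp (Lrep r g x) = (\<lambda>k. mu r l k * crd r vm vp x k)"
proof -
  have D: "det2 vm vp \<noteq> 0" using e by (simp add: eigd_def)
  have l: "l \<noteq> 0" using e by (simp add: eigd_def)
  have "crd r vm vp (Lrep r g x) = Lrep r (invm vm vp ** g) x"
    unfolding crd_def using D by (simp add: Lrep_mult det_invm_nz)
  also have "\<dots> = Lrep r (dg l) (crd r vm vp x)"
    unfolding eig_mat[OF e] crd_def using l by (simp add: Lrep_mult det_2)
  also have "\<dots> = (\<lambda>k. mu r l k * crd r vm vp x k)" by (rule Lrep_dg[OF crd_Vr])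
  finally show ?thesis .
qed

lemma crd_lin: "crd r v w (\<lambda>k. a * c k + b * d k) = (\<lambda>k. a * crd r v w c k + b * crd r v w d k)"
  by (simp add: crd_def Lrep_lin)

lemma crd_add: "crd r v w (\<lambda>k. c k + d k) = (\<lambda>k. crd r v w c k + crd r v w d k)"
  by (simp add: crd_def Lrep_add)

lemma crd_Ev: "det2 v w \<noteq> 0 \<Longrightarrow> i \<le> 2*r \<Longrightarrow> crd r v w (Ev r i a b) = Ev r i (invm v w *v a) (invm v w *v b)"
  by (simp add: crd_def Lrep_Ev det_invm_nz)

lemma invm_v: "det2 v w \<noteq> 0 \<Longrightarrow> (invm v w *v v)$1 = 1 \<and> (invm v w *v v)$2 = 0"
  apply (simp add: divide_simps)
  apply (simp add: det2_def algebra_simps)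
  done

lemma invm_w: "det2 v w \<noteq> 0 \<Longrightarrow> (invm v w *v w)$1 = 0 \<and> (invm v w *v w)$2 = 1"
  apply (simp add: divide_simps)
  apply (simp add: det2_def algebra_simps)
  done

fun pw :: "mat2 \<Rightarrow> nat \<Rightarrow> mat2" where
  "pw g 0 = mat 1"
| "pw g (Suc m) = g ** pw g m"

lemma psl_props:
  assumes "psl_subgroup G"
  shows "\<And>g. g \<in> G \<Longrightarrow> det g = 1" "mat 1 \<in> G" "\<And>a b. a \<in> G \<Longrightarrow> b \<in> G \<Longrightarrow> a ** b \<in> G"
    "\<And>a. a \<in> G \<Longrightarrow> matrix_inv a \<in> G"
  using assms unfolding psl_subgroup_def SL2_def by auto

lemma pw_in: "psl_subgroup G \<Longrightarrow> g \<in> G \<Longrightarrow> pw g m \<in> G"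
  by (induction m) (auto dest: psl_props)

lemma u_id:
  assumes G: "psl_subgroup G" and u: "cocycle r G u"
  shows "u (mat 1) = (\<lambda>k. 0)"
proof -
  have I: "mat 1 \<in> G" using psl_props[OF G] by blast
  have V: "u (mat 1) \<in> Vr r" using u I by (simp add: cocycle_def)
  have "u (mat 1 ** mat 1) = (\<lambda>k. u (mat 1) k + Lrep r (mat 1) (u (mat 1)) k)"
 using u I unfolding cocycle_def by blast
  then have "u (mat 1) = (\<lambda>k. u (mat 1) k + u (mat 1) k)" using Lrep_id[OF V] by simp
  then show ?thesis by (simp add: fun_eq_iff)
qed

lemma aff_Vr:
  assumes "cocycle r G u" "g \<in> G"
  shows "aff r u g x \<in> Vr r"
  using assms Lrep_Vr[of r g x] by (auto simp: aff_def cocycle_def Vr_def)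

lemma aff_mult:
  assumes G: "psl_subgroup G" and u: "cocycle r G u" and g: "g \<in> G" and h: "h \<in> G"
  shows "aff r u (g ** h) x = aff r u g (aff r u h x)"
proof -
  have dg: "det g \<noteq> 0" using psl_props(1)[OF G g] by simp
  have "aff r u (g ** h) x = (\<lambda>k. Lrep r g (Lrep r h x) k + (u g k + Lrep r g (u h) k))"
    using u g h Lrep_mult[OF dg] by (simp add: aff_def cocycle_def)
  also have "\<dots> = aff r u g (aff r u h x)"
    by (simp add: aff_def Lrep_add fun_eq_iff ac_simps)
  finally show ?thesis .
qed

lemma aff_pw:
  assumes G: "psl_subgroup G" and u: "cocycle r G u" and g: "g \<in> G" and x: "x \<in> Vr r"
  shows "aff r u (pw g m) x = (aff r u g ^^ m) x"
proof (induction m)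
  case 0
  then show ?case using u_id[OF G u] Lrep_id[OF x] by (simp add: aff_def)
next
  case (Suc m)
  then show ?case using aff_mult[OF G u g pw_in[OF G g]] by simp
qed

lemma crd_aff:
  assumes e: "eigd g l vm vp"
  shows "crd r vm vp (aff r u g x) k = mu r l k * crd r vm vp x k + crd r vm vp (u g) k"
  unfolding aff_def crd_add crd_Lrep[OF e] by simp

lemma crd_iter:
  assumes e: "eigd g l vm vp"
  shows "crd r vm vp ((aff r u g ^^ m) x) k =
    mu r l k ^ m * crd r vm vp x k + crd r vm vp (u g) k * (\<Sum>j<m. mu r l k ^ j)"
proof (induction m)
  case 0 then show ?case by simp
next
  case (Suc m)
  have "crd r vm vp ((aff r u g ^^ Suc m) x) k = mu r l k * crd r vm vp ((aff r u g ^^ m) x) k + crd r vm vp (u g) k"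
    using crd_aff[OF e] by simp
  also have "\<dots> = mu r l k ^ Suc m * crd r vm vp x k + crd r vm vp (u g) k * (\<Sum>j<Suc m. mu r l k ^ j)"
    unfolding Suc sum.lessThan_Suc_shift by (simp add: algebra_simps sum_distrib_left)
  finally show ?case .
qed

lemma geom_sum_mul: "(1 - m) * (\<Sum>j<n. m ^ j) = 1 - (m::real) ^ n"
proof (induction n)
  case 0 then show ?case by simp
next
  case (Suc n)
  have "(1 - m) * (\<Sum>j<Suc n. m ^ j) = (1 - m) * (\<Sum>j<n. m ^ j) + (1 - m) * m ^ n"
    by (simp add: distrib_left)
  also have "\<dots> = 1 - m ^ n + (1 - m) * m ^ n" using Suc.IH by simp
  also have "\<dots> = 1 - m ^ Suc n" by (simp add: algebra_simps)
  finally show ?case .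
qed

lemma geom_fix:
  assumes "m \<noteq> 1"
  shows "m ^ n * (a / (1 - m)) + a * (\<Sum>j<n. m ^ j) = a / (1 - (m::real))"
proof -
  have nz: "1 - m \<noteq> 0" using assms by auto
  have hS: "(\<Sum>j<n. m ^ j) = (1 - m ^ n) / (1 - m)"
    using geom_sum_mul[of m n] nz by (simp add: eq_divide_eq mult.commute)
  have "m ^ n * (a / (1 - m)) + a * ((1 - m ^ n) / (1 - m)) = (m ^ n * a + a * (1 - m ^ n)) / (1 - m)"
    by (simp add: add_divide_distrib)
  also have "m ^ n * a + a * (1 - m ^ n) = a" by (simp add: algebra_simps)
  finally show ?thesis unfolding hS .
qed

lemma mu_le: "k \<le> r \<Longrightarrow> l \<noteq> 0 \<Longrightarrow> mu r l k = l ^ (2*r - 2*k)"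
proof -
  assume k: "k \<le> r" and l: "l \<noteq> 0"
  have "l ^ (2*r - k) = l ^ (2*r - 2*k) * l ^ k" using k by (simp add: power_add[symmetric])
  then show ?thesis using l by (simp add: mu_def power_one_over)
qed

lemma mu_ge: "r \<le> k \<Longrightarrow> k \<le> 2*r \<Longrightarrow> l \<noteq> 0 \<Longrightarrow> mu r l k = 1 / l ^ (2*k - 2*r)"
proof -
  assume k: "r \<le> k" "k \<le> 2*r" and l: "l \<noteq> 0"
  have "l ^ k = l ^ (2*k - 2*r) * l ^ (2*r - k)" using k by (simp add: power_add[symmetric])
  then show ?thesis using l by (simp add: mu_def power_one_over)
qed

lemma mu_r: "l \<noteq> 0 \<Longrightarrow> mu r l r = 1"
  using mu_le[of r r l] by simp

lemma pow_abs_le_sq: "\<bar>l\<bar> < 1 \<Longrightarrow> 1 \<le> j \<Longrightarrow> \<bar>(l::real) ^ (2*j)\<bar> \<le> l\<^sup>2"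
proof -
  assume l: "\<bar>l\<bar> < 1" and j: "1 \<le> j"
  have "\<bar>l ^ (2*j)\<bar> = (l\<^sup>2) ^ j" by (simp add: power_mult power_abs)
  also have "\<dots> \<le> (l\<^sup>2) ^ 1" using l j
    by (intro power_decreasing) (auto simp: abs_square_less_1 less_imp_le)
  finally show ?thesis by simp
qed

lemma mu_small: "k < r \<Longrightarrow> 0 < \<bar>l\<bar> \<Longrightarrow> \<bar>l\<bar> < 1 \<Longrightarrow> \<bar>mu r l k\<bar> \<le> l\<^sup>2"
proof -
  assume k: "k < r" and l: "0 < \<bar>l\<bar>" "\<bar>l\<bar> < 1"
  have "mu r l k = l ^ (2 * (r - k))" using mu_le[of k r l] k l by (simp add: right_diff_distrib')
  then show ?thesis using pow_abs_le_sq[OF l(2), of "r - k"] k by simp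
qed

lemma mu_big: "r < k \<Longrightarrow> k \<le> 2*r \<Longrightarrow> 0 < \<bar>l\<bar> \<Longrightarrow> \<bar>l\<bar> < 1 \<Longrightarrow> \<bar>1 / mu r l k\<bar> \<le> l\<^sup>2"
proof -
  assume k: "r < k" "k \<le> 2*r" and l: "0 < \<bar>l\<bar>" "\<bar>l\<bar> < 1"
  have "1 / mu r l k = l ^ (2 * (k - r))" using mu_ge[of r k l] k l by (simp add: right_diff_distrib')
  then show ?thesis using pow_abs_le_sq[OF l(2), of "k - r"] k by simp
qed

lemma mu_ne1: "k \<noteq> r \<Longrightarrow> k \<le> 2*r \<Longrightarrow> 0 < \<bar>l\<bar> \<Longrightarrow> \<bar>l\<bar> < 1 \<Longrightarrow> mu r l k \<noteq> 1"
proof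
  assume k: "k \<noteq> r" "k \<le> 2*r" and l: "0 < \<bar>l\<bar>" "\<bar>l\<bar> < 1" and m: "mu r l k = 1"
  have l2: "l\<^sup>2 < 1" using l by (simp add: abs_square_less_1)
  show False
  proof (cases "k < r")
    case True then show False using mu_small[OF True l] m l2 by simp
  next
    case False then have "r < k" using k by simp
    then show False using mu_big[OF _ k(2) l] m l2 by simp
  qed
qed

lemma expo_lin_bound:
  assumes "0 \<le> c" "c < (1::real)"
  shows "\<exists>B. \<forall>j. c ^ j * (C1 + C2 * real j) \<le> B"
proof -
  have "(\<lambda>n. of_nat n * c ^ n) \<longlonglongrightarrow> 0" using assms by (intro powser_times_n_limit_0) simp
  then have "Bseq (\<lambda>n. of_nat n * c ^ n)" by (intro convergent_imp_Bseq convergentI)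
  then obtain K where K: "\<And>n. norm (of_nat n * c ^ n) \<le> K" unfolding Bseq_def by blast
  have "c ^ j * (C1 + C2 * real j) \<le> \<bar>C1\<bar> + \<bar>C2\<bar> * K" for j
  proof -
    have c1: "c ^ j \<le> 1" using assms by (simp add: power_le_one)
    have "c ^ j * C1 \<le> \<bar>C1\<bar>" using c1 assms
      by (metis abs_ge_self abs_mult abs_of_nonneg mult_left_le_one_le order_trans zero_le_power abs_ge_zero)
    moreover have "c ^ j * (C2 * real j) \<le> \<bar>C2\<bar> * K"
    proof -
      have "c ^ j * (C2 * real j) \<le> \<bar>C2\<bar> * (real j * c ^ j)"
        using assms by (simp add: abs_mult mult_right_mono ac_simps)
      also have "\<dots> \<le> \<bar>C2\<bar> * K" using K[of j] assms by (intro mult_left_mono) auto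
      finally show ?thesis .
    qed
    ultimately show ?thesis by (simp add: distrib_left)
  qed
  then show ?thesis by blast
qed

lemma finite_bound:
  fixes N :: nat
  assumes "\<And>k. k \<le> N \<Longrightarrow> \<exists>R. \<forall>j. \<bar>f j k\<bar> \<le> (R::real)"
  shows "\<exists>R. \<forall>j k. k \<le> N \<longrightarrow> \<bar>f j k\<bar> \<le> R"
proof -
  from assms obtain R where R: "\<And>k. k \<le> N \<Longrightarrow> \<forall>j. \<bar>f j k\<bar> \<le> R k" by metis
  have "\<bar>f j k\<bar> \<le> (\<Sum>i\<le>N. \<bar>R i\<bar>)" if "k \<le> N" for j k
  proof -
    have "\<bar>f j k\<bar> \<le> \<bar>R k\<bar>" using R[OF that] by (meson abs_ge_self order_trans)
    also have "\<dots> \<le> (\<Sum>i\<le>N. \<bar>R i\<bar>)" using that by (intro member_le_sum) auto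
    finally show ?thesis .
  qed
  then show ?thesis by blast
qed

lemma Lrep_bound: "\<exists>C\<ge>0. \<forall>z R. (\<forall>i. \<bar>z i\<bar> \<le> R) \<longrightarrow> (\<forall>k. \<bar>Lrep r M z k\<bar> \<le> C * R)"
proof -
  define pl where "pl i = [: M$2$1, M$1$1 :] ^ i * [: M$2$2, M$1$2 :] ^ (2*r - i)" for i
  define C where "C = (\<Sum>k\<le>2*r. \<Sum>i\<le>2*r. \<bar>coeff (pl i) k\<bar>)"
  have C0: "C \<ge> 0" unfolding C_def by (intro sum_nonneg) auto
  have "\<bar>Lrep r M z k\<bar> \<le> C * R" if z: "\<forall>i. \<bar>z i\<bar> \<le> R" for z R k
  proof -
    have R0: "R \<ge> 0" using z by (meson abs_ge_zero order_trans)
    show ?thesis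
    proof (cases "k \<le> 2*r")
      case False
      then have "Lrep r M z k = 0" using Lrep_Vr[of r M z] by (simp add: Vr_def)
      then show ?thesis using C0 R0 by simp
    next
      case True
      have "Lrep r M z k = (\<Sum>i\<le>2*r. z i * coeff (pl i) k)"
        by (simp add: Lrep_def pl_def coeff_sum)
      then have "\<bar>Lrep r M z k\<bar> \<le> (\<Sum>i\<le>2*r. \<bar>z i\<bar> * \<bar>coeff (pl i) k\<bar>)"
        by (simp add: abs_mult[symmetric] sum_abs)
      also have "\<dots> \<le> (\<Sum>i\<le>2*r. R * \<bar>coeff (pl i) k\<bar>)"
        using z by (intro sum_mono mult_right_mono) auto
      also have "\<dots> = R * (\<Sum>i\<le>2*r. \<bar>coeff (pl i) k\<bar>)" by (simp add: sum_distrib_left)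
      also have "\<dots> \<le> R * C" unfolding C_def using True R0
        by (intro mult_left_mono member_le_sum[of k "{..2*r}" "\<lambda>k. \<Sum>i\<le>2*r. \<bar>coeff (pl i) k\<bar>"]) 
           (auto intro: sum_nonneg)
      finally show ?thesis by (simp add: mult.commute)
    qed
  qed
  then show ?thesis using C0 by blast
qed

lemma crd_sum: "finite I \<Longrightarrow> crd r v w (\<lambda>k. \<Sum>i\<in>I. c i * f i k) = (\<lambda>k. \<Sum>i\<in>I. c i * crd r v w (f i) k)"
  by (simp add: crd_def Lrep_sum Lrep_scale)

lemma crd_inj: "det2 v w \<noteq> 0 \<Longrightarrow> x \<in> Vr r \<Longrightarrow> y \<in> Vr r \<Longrightarrow> crd r v w x = crd r v w y \<Longrightarrow> x = y"
  by (metis Lrep_colmat_crd)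

definition box :: "nat \<Rightarrow> real \<Rightarrow> Vvec set" where
  "box r R = PiE UNIV (\<lambda>k. if k \<le> 2*r then {-R..R} else {0})"

lemma box_compact: "compact (box r R)"
proof -
  have "compactin (product_topology (\<lambda>i. euclidean) UNIV) (box r R)"
    unfolding box_def compactin_PiE by auto
  then show ?thesis by (simp add: euclidean_product_topology)
qed

lemma box_Vr: "box r R \<subseteq> Vr r"
proof
  fix x assume "x \<in> box r R"
  then have h: "\<And>k. x k \<in> (if k \<le> 2*r then {-R..R} else {0})"
    by (simp add: box_def PiE_UNIV_domain Pi_iff)
  show "x \<in> Vr r" unfolding Vr_def
  proof (intro CollectI allI impI)
    fix k assume "k > 2*r"
    then show "x k = 0" using h[of k] by simp
  qed
qed

lemma in_box: "x \<in> Vr r \<Longrightarrow> (\<forall>k. \<bar>x k\<bar> \<le> R) \<Longrightarrow> x \<in> box r R"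
proof -
  assume x: "x \<in> Vr r" and b: "\<forall>k. \<bar>x k\<bar> \<le> R"
  have "x k \<in> (if k \<le> 2*r then {-R..R} else {0})" for k
  proof (cases "k \<le> 2*r")
    case True then show ?thesis using b[rule_format, of k] by (simp add: abs_le_iff)
  next
    case False then show ?thesis using x by (simp add: Vr_def)
  qed
  then show ?thesis by (simp add: box_def PiE_UNIV_domain Pi_iff)
qed

lemma pw_mv: "g *v v = c *\<^sub>R v \<Longrightarrow> pw g m *v v = (c ^ m) *\<^sub>R v"
proof (induction m)
  case 0 then show ?case by simp
next
  case (Suc m)
  have "pw g (Suc m) *v v = g *v (pw g m *v v)" by (simp add: matrix_vector_mul_assoc)
  also have "\<dots> = (c ^ Suc m) *\<^sub>R v" using Suc by (simp add: matrix_vector_mult_scaleR)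
  finally show ?case .
qed

lemma coeff_x_pow_mult: "coeff ([:0, 1:] ^ i * p) k = (if k < i then 0 else coeff p (k - i))"
  using coeff_monom_mult[of 1 i p k] by (simp add: monom_altdef)

lemma crd_diff: "crd r v w (\<lambda>k. c k - d k) = (\<lambda>k. crd r v w c k - crd r v w d k)"
  by (simp add: crd_def Lrep_diff)

lemma FA:
  assumes "det2 vm vp \<noteq> 0" "i \<le> 2*r"
  shows "crd r vm vp (Ev r i wm vp) k = (if k \<le> i then real (i choose k) * (det2 wm vp / det2 vm vp) ^ k * ((invm vm vp *v wm)$2) ^ (i - k) else 0)"
proof -
  define \<beta> where "\<beta> = invm vm vp *v wm"
  have b1: "\<beta>$1 = det2 wm vp / det2 vm vp"
    unfolding \<beta>_def by (simp add: det2_def diff_divide_distrib algebra_simps)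
  have e: "lin (invm vm vp *v vp) = 1" using invm_w[OF assms(1)] by (simp add: lin_def one_pCons)
  have "crd r vm vp (Ev r i wm vp) = coeff (lin \<beta> ^ i)"
    using crd_Ev[OF assms, where a=wm and b=vp] unfolding \<beta>_def[symmetric] Ev_def e by simp
  then show ?thesis unfolding \<beta>_def[symmetric] lin_def by (simp add: coeff_lin_pow b1)
qed

lemma FY:
  assumes "det2 wm wp \<noteq> 0" "i \<le> 2*r"
  shows "crd r wm wp (Ev r i wm vp) k = (if k < i then 0 else coeff ([:(det2 wm vp / det2 wm wp), (invm wm wp *v vp)$1:] ^ (2*r - i)) (k - i))"
proof -
  define \<gamma> where "\<gamma> = invm wm wp *v vp"
  have g2: "\<gamma>$2 = det2 wm vp / det2 wm wp"
    unfolding \<gamma>_def by (simp add: det2_def diff_divide_distrib algebra_simps)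
  have e: "lin (invm wm wp *v wm) = [:0, 1:]" using invm_v[OF assms(1)] by (simp add: lin_def)
  have "crd r wm wp (Ev r i wm vp) = coeff ([:0, 1:] ^ i * lin \<gamma> ^ (2*r - i))"
    using crd_Ev[OF assms, where a=wm and b=vp] unfolding \<gamma>_def[symmetric] Ev_def e by simp
  then show ?thesis unfolding \<gamma>_def[symmetric] lin_def by (simp add: coeff_x_pow_mult g2)
qed

lemma FA0: "det2 vm vp \<noteq> 0 \<Longrightarrow> i \<le> 2*r \<Longrightarrow> i < k \<Longrightarrow> crd r vm vp (Ev r i wm vp) k = 0"
  by (simp add: FA)

lemma FAr: "det2 vm vp \<noteq> 0 \<Longrightarrow> crd r vm vp (Ev r r wm vp) r = (det2 wm vp / det2 vm vp) ^ r"
  by (simp add: FA)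

lemma FY0: "det2 wm wp \<noteq> 0 \<Longrightarrow> i \<le> 2*r \<Longrightarrow> k < i \<Longrightarrow> crd r wm wp (Ev r i wm vp) k = 0"
  by (simp add: FY)

lemma FYr: "det2 wm wp \<noteq> 0 \<Longrightarrow> crd r wm wp (Ev r r wm vp) r = (det2 wm vp / det2 wm wp) ^ r"
  by (simp add: FY coeff_lin_pow mult_2)

lemma base_point:
  assumes DA: "det2 vm vp \<noteq> 0" and DY: "det2 wm wp \<noteq> 0" and nd: "det2 wm vp \<noteq> 0"
  shows "\<exists>y0 \<in> Vr r. (\<forall>k. r < k \<longrightarrow> k \<le> 2*r \<longrightarrow> crd r vm vp y0 k = p k) \<and> (\<forall>k<r. crd r wm wp y0 k = q k)"
proof -
  define pv where "pv = (\<lambda>k. if r < k \<and> k \<le> 2*r then p k else 0)"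
  define qv where "qv = (\<lambda>k. if k < r then q k else 0)"
  have pvV: "pv \<in> Vr r" by (simp add: pv_def Vr_def)
  have qvV: "qv \<in> Vr r" by (simp add: qv_def Vr_def)
  define P where "P = Lrep r (colmat vm vp) pv"
  define Q where "Q = Lrep r (colmat wm wp) qv"
  define F where "F i = Ev r i wm vp" for i
  define wv where "wv = crd r wm vp (\<lambda>k. P k - Q k)"
  have PQV: "(\<lambda>k. P k - Q k) \<in> Vr r" unfolding P_def Q_def by (intro Vr_diff Lrep_Vr)
  have PQ: "(\<lambda>k. P k - Q k) = (\<lambda>k. \<Sum>i\<le>2*r. wv i * F i k)"
    using Lrep_colmat_crd[OF nd PQV] unfolding wv_def F_def Lrep_colmat by simp
  have split: "{..2*r} = {..r} \<union> {r<..2*r}" by auto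
  have PQ2: "P k - Q k = (\<Sum>i\<le>r. wv i * F i k) + (\<Sum>i\<in>{r<..2*r}. wv i * F i k)" for k
    using fun_cong[OF PQ, of k] unfolding split by (subst (asm) sum.union_disjoint) auto
  define y0 where "y0 = (\<lambda>k. P k - (\<Sum>i\<le>r. wv i * F i k))"
  have y0': "y0 = (\<lambda>k. Q k + (\<Sum>i\<in>{r<..2*r}. wv i * F i k))"
    unfolding y0_def using PQ2 by (simp add: fun_eq_iff algebra_simps)
  have FV: "i \<le> 2*r \<Longrightarrow> F i \<in> Vr r" for i by (simp add: F_def Ev_Vr)
  have y0V: "y0 \<in> Vr r" unfolding y0_def P_def
    by (intro Vr_diff Lrep_Vr Vr_sum Vr_scale) (auto simp: F_def intro!: Ev_Vr)
  have cA: "crd r vm vp y0 k = p k" if k: "r < k" "k \<le> 2*r" for k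
  proof -
    have "crd r vm vp y0 k = crd r vm vp P k - (\<Sum>i\<le>r. wv i * crd r vm vp (F i) k)"
      unfolding y0_def crd_diff crd_sum[OF finite_atMost] by simp
    also have "crd r vm vp P k = p k" unfolding P_def crd_Lrep_colmat[OF DA pvV] using k by (simp add: pv_def)
    also have "(\<Sum>i\<le>r. wv i * crd r vm vp (F i) k) = 0"
      using k by (intro sum.neutral) (auto simp: F_def FA0[OF DA])
    finally show ?thesis by simp
  qed
  have cY: "crd r wm wp y0 k = q k" if k: "k < r" for k
  proof -
    have "crd r wm wp y0 k = crd r wm wp Q k + (\<Sum>i\<in>{r<..2*r}. wv i * crd r wm wp (F i) k)"
      unfolding y0' crd_add crd_sum[OF finite_greaterThanAtMost] by simp
    also have "crd r wm wp Q k = q k" unfolding Q_def crd_Lrep_colmat[OF DY qvV] using k by (simp add: qv_def)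
    also have "(\<Sum>i\<in>{r<..2*r}. wv i * crd r wm wp (F i) k) = 0"
      using k by (intro sum.neutral) (auto simp: F_def FY0[OF DY])
    finally show ?thesis by simp
  qed
  show ?thesis using y0V cA cY by blast
qed

lemma funpow_aff_Vr:
  assumes "cocycle r G u" "g \<in> G" "x \<in> Vr r"
  shows "(aff r u g ^^ n) x \<in> Vr r"
  using assms by (induction n) (auto intro: aff_Vr)

lemma lin_abs: "\<bar>(p + q * real j) / s\<bar> \<le> \<bar>p\<bar> / \<bar>s\<bar> + \<bar>q\<bar> / \<bar>s\<bar> * real j"
proof -
  have "\<bar>p + q * real j\<bar> \<le> \<bar>p\<bar> + \<bar>q\<bar> * real j"
    by (metis abs_mult abs_of_nat abs_triangle_ineq)
  then show ?thesis by (simp add: abs_divide divide_right_mono add_divide_distrib[symmetric])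
qed

lemma decay_bound:
  assumes c: "0 \<le> c" "c < 1" and Z: "\<And>j. \<bar>Z j\<bar> \<le> c ^ j * \<bar>X j\<bar>"
    and X: "\<And>j. \<bar>X j\<bar> \<le> C1 + C2 * real j"
  shows "\<exists>R. \<forall>j. \<bar>Z j\<bar> \<le> (R::real)"
proof -
  obtain B where B: "\<And>j. c ^ j * (C1 + C2 * real j) \<le> B" using expo_lin_bound[OF c] by blast
  have "\<bar>Z j\<bar> \<le> B" for j
  proof -
    have "\<bar>Z j\<bar> \<le> c ^ j * \<bar>X j\<bar>" by (rule Z)
    also have "\<dots> \<le> c ^ j * (C1 + C2 * real j)" using X c by (intro mult_left_mono) auto
    also have "\<dots> \<le> B" by (rule B)
    finally show ?thesis .
  qed
  then show ?thesis by blast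
qed

lemma core:
  assumes G: "psl_subgroup G" and u: "cocycle r G u"
    and A: "A \<in> G" and Y: "Y \<in> G"
    and eA: "eigd A l vm vp" and eY: "eigd Y \<rho> wm wp"
    and nd: "det2 wm vp \<noteq> 0"
    and ar: "crd r vm vp (u A) r < 0" and br: "crd r wm wp (u Y) r > 0"
  shows "\<not> acts_properly r G u"
proof
  assume proper: "acts_properly r G u"
  define cA where "cA = crd r vm vp"
  define cY where "cY = crd r wm wp"
  define a where "a = cA (u A)"
  define b where "b = cY (u Y)"
  have DA: "det2 vm vp \<noteq> 0" and DAp: "det2 vm vp > 0" using eA by (auto simp: eigd_def)
  have DY: "det2 wm wp \<noteq> 0" and DYp: "det2 wm wp > 0" using eY by (auto simp: eigd_def)
  have lA: "0 < \<bar>l\<bar>" "\<bar>l\<bar> < 1" using eA by (auto simp: eigd_def)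
  have lY: "0 < \<bar>\<rho>\<bar>" "\<bar>\<rho>\<bar> < 1" using eY by (auto simp: eigd_def)
  have l0: "l \<noteq> 0" and r0: "\<rho> \<noteq> 0" using lA lY by auto
  have uAV: "u A \<in> Vr r" and uYV: "u Y \<in> Vr r" using u A Y by (auto simp: cocycle_def)
  define pA where "pA k = a k / (1 - mu r l k)" for k
  define qY where "qY k = b k / (1 - mu r \<rho> k)" for k
  obtain y0 where y0V: "y0 \<in> Vr r" and y0A: "\<And>k. r < k \<Longrightarrow> k \<le> 2*r \<Longrightarrow> cA y0 k = pA k"
    and y0Y: "\<And>k. k < r \<Longrightarrow> cY y0 k = qY k"
    using base_point[OF DA DY nd, of r pA qY] unfolding cA_def cY_def by blast
  define d where "d = Ev r r wm vp"
  have dV: "d \<in> Vr r" unfolding d_def by (rule Ev_Vr) simp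
  define BA where "BA = (det2 wm vp / det2 vm vp) ^ r"
  define BY where "BY = (det2 wm vp / det2 wm wp) ^ r"
  have dA0: "\<And>k. r < k \<Longrightarrow> cA d k = 0" unfolding cA_def d_def by (rule FA0[OF DA]) auto
  have dAr: "cA d r = BA" unfolding cA_def d_def BA_def by (rule FAr[OF DA])
  have dY0: "\<And>k. k < r \<Longrightarrow> cY d k = 0" unfolding cY_def d_def by (rule FY0[OF DY]) auto
  have dYr: "cY d r = BY" unfolding cY_def d_def BY_def by (rule FYr[OF DY])
  have BABY: "BA * BY > 0"
  proof -
    have "BA * BY = (det2 wm vp ^ 2 / (det2 vm vp * det2 wm wp)) ^ r"
      unfolding BA_def BY_def by (simp add: power_mult_distrib[symmetric] power2_eq_square)
    moreover have "det2 wm vp ^ 2 / (det2 vm vp * det2 wm wp) > 0"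
      using nd DAp DYp by (simp add: zero_less_power2)
    ultimately show ?thesis by simp
  qed
  have BY0: "BY \<noteq> 0" using BABY by auto
  have BAY: "BA / BY > 0" using BABY by (simp add: zero_less_divide_iff zero_less_mult_iff)
  have ar': "a r < 0" and br': "b r > 0" using ar br by (simp_all add: a_def b_def cA_def cY_def)
  define \<theta> where "\<theta> = b r * (BA / BY) / (- a r)"
  have th: "\<theta> > 0" unfolding \<theta>_def using ar' by (intro divide_pos_pos[OF mult_pos_pos[OF br' BAY]]) simp
  define K0 where "K0 = nat \<lceil>1 / \<theta>\<rceil> + 1"
  have K0: "real K0 * \<theta> \<ge> 1"
  proof -
    have "real K0 \<ge> 1 / \<theta>" unfolding K0_def by linarith
    then show ?thesis using th by (simp add: field_simps)
  qed
  have K01: "K0 \<ge> 1" unfolding K0_def by simp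
  define n where "n j = K0 * (j + 1)" for j
  define m where "m j = nat \<lfloor>\<theta> * real (n j)\<rfloor>" for j
  have thn: "\<theta> * real (n j) \<ge> real j + 1" for j
  proof -
    have "\<theta> * real (n j) = (real K0 * \<theta>) * (real j + 1)" by (simp add: n_def algebra_simps)
    also have "\<dots> \<ge> 1 * (real j + 1)" using K0 by (intro mult_right_mono) auto
    finally show ?thesis by simp
  qed
  have m_real: "real (m j) = of_int \<lfloor>\<theta> * real (n j)\<rfloor>" for j
    unfolding m_def using thn[of j] by (simp add: floor_less_cancel)
  have m_close: "\<bar>real (m j) - \<theta> * real (n j)\<bar> \<le> 1" for j
    unfolding m_real by linarith
  have m_ge: "m j \<ge> j" for j
  proof -
    have "real (m j) > \<theta> * real (n j) - 1" unfolding m_real by linarith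
    then have "real (m j) > real j" using thn[of j] by linarith
    then show ?thesis by simp
  qed
  have n_ge: "n j \<ge> j" for j unfolding n_def using K01 mult_le_mono1[of 1 K0 "j+1"] by simp
  have m_mono: "j1 \<le> j2 \<Longrightarrow> m j1 \<le> m j2" for j1 j2
    unfolding m_def n_def using th by (intro nat_mono floor_mono mult_left_mono) (auto intro: mult_left_mono)
  have n_mono: "j1 < j2 \<Longrightarrow> n j1 < n j2" for j1 j2
    unfolding n_def using K01 by simp
  define t where "t j = (real (n j) * b r - cY y0 r) / BY" for j
  define y where "y j = (\<lambda>k. y0 k + t j * d k)" for j
  have yV: "y j \<in> Vr r" for j unfolding y_def using y0V dV by (intro Vr_lin[of _ _ _ 1, simplified]) 
  have cAy: "cA (y j) k = cA y0 k + t j * cA d k" for j k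
    unfolding y_def cA_def using crd_lin[of r vm vp 1 y0 "t j" d] by simp
  have cYy: "cY (y j) k = cY y0 k + t j * cY d k" for j k
    unfolding y_def cY_def using crd_lin[of r wm wp 1 y0 "t j" d] by simp
  have t_lin: "\<bar>t j\<bar> \<le> T1 + T2 * real j" if "T1 = \<bar>real K0 * b r - cY y0 r\<bar> / \<bar>BY\<bar>" "T2 = \<bar>real K0 * b r\<bar> / \<bar>BY\<bar>" for j T1 T2
  proof -
    have "t j = ((real K0 * b r - cY y0 r) + (real K0 * b r) * real j) / BY"
      unfolding t_def n_def by (simp add: algebra_simps)
    then show ?thesis using lin_abs that by simp
  qed
  define T1 where "T1 = \<bar>real K0 * b r - cY y0 r\<bar> / \<bar>BY\<bar>"
  define T2 where "T2 = \<bar>real K0 * b r\<bar> / \<bar>BY\<bar>"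
  have tl: "\<bar>t j\<bar> \<le> T1 + T2 * real j" for j using t_lin T1_def T2_def by blast
  have T2p: "T2 \<ge> 0" by (simp add: T2_def)
  define \<xi> where "\<xi> j k = (if k < r then qY k else if k = r then 0 else if k \<le> 2*r then
       (1 / mu r \<rho> k) ^ (n j) * (cY (y j) k - qY k) + qY k else 0)" for j k
  have \<xi>V: "\<xi> j \<in> Vr r" for j by (simp add: \<xi>_def Vr_def)
  define x where "x j = Lrep r (colmat wm wp) (\<xi> j)" for j
  have xV: "x j \<in> Vr r" for j unfolding x_def by (rule Lrep_Vr)
  have cYx: "cY (x j) = \<xi> j" for j unfolding x_def cY_def by (rule crd_Lrep_colmat[OF DY \<xi>V])
  have C1: "(aff r u Y ^^ n j) (x j) = y j" for j
  proof (rule crd_inj[OF DY funpow_aff_Vr[OF u Y xV] yV])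
    show "crd r wm wp ((aff r u Y ^^ n j) (x j)) = crd r wm wp (y j)"
    proof
      fix k
      have it: "crd r wm wp ((aff r u Y ^^ n j) (x j)) k = mu r \<rho> k ^ n j * \<xi> j k + b k * (\<Sum>i<n j. mu r \<rho> k ^ i)"
        using crd_iter[OF eY, where r=r and u=u and m="n j" and x="x j" and k=k] cYx unfolding b_def cY_def by simp
      consider "k < r" | "k = r" | "r < k \<and> k \<le> 2*r" | "2*r < k" by linarith
      then show "crd r wm wp ((aff r u Y ^^ n j) (x j)) k = crd r wm wp (y j) k"
      proof cases
        case 1
        have "mu r \<rho> k \<noteq> 1" using 1 lY by (intro mu_ne1) auto
        then have "mu r \<rho> k ^ n j * qY k + b k * (\<Sum>i<n j. mu r \<rho> k ^ i) = qY k"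
          unfolding qY_def by (rule geom_fix)
        moreover have "crd r wm wp (y j) k = qY k" using cYy[of j k] y0Y[OF 1] dY0[OF 1] by (simp add: cY_def)
        ultimately show ?thesis using it 1 by (simp add: \<xi>_def)
      next
        case 2
        have "crd r wm wp (y j) k = real (n j) * b r"
          using cYy[of j k] dYr 2 BY0 by (simp add: cY_def t_def)
        then show ?thesis using it 2 by (simp add: \<xi>_def mu_r[OF r0])
      next
        case 3
        have mn: "mu r \<rho> k \<noteq> 1" "mu r \<rho> k \<noteq> 0" using 3 lY mu_ne1[of k r \<rho>] by (auto simp: mu_def)
        have g: "mu r \<rho> k ^ n j * qY k + b k * (\<Sum>i<n j. mu r \<rho> k ^ i) = qY k"
          unfolding qY_def by (rule geom_fix[OF mn(1)])
        have "mu r \<rho> k ^ n j * \<xi> j k = (cY (y j) k - qY k) + mu r \<rho> k ^ n j * qY k"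
          using 3 mn by (simp add: \<xi>_def distrib_left power_one_over field_simps)
        then show ?thesis using it g by (simp add: cY_def)
      next
        case 4
        have "crd r wm wp ((aff r u Y ^^ n j) (x j)) k = 0" "crd r wm wp (y j) k = 0"
          using crd_Vr 4 by (auto simp: Vr_def)
        then show ?thesis by simp
      qed
    qed
  qed
  define gg where "gg j = pw A (m j) ** pw Y (n j)" for j
  have ggG: "gg j \<in> G" for j unfolding gg_def using pw_in[OF G A] pw_in[OF G Y] psl_props(3)[OF G] by blast
  have C2: "aff r u (gg j) (x j) = (aff r u A ^^ m j) (y j)" for j
    unfolding gg_def aff_mult[OF G u pw_in[OF G A] pw_in[OF G Y]]
    using aff_pw[OF G u Y xV] aff_pw[OF G u A yV] C1 by simp
  have l2: "0 \<le> l\<^sup>2" "l\<^sup>2 < 1" using lA by (auto simp: abs_square_less_1)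
  have r2: "0 \<le> \<rho>\<^sup>2" "\<rho>\<^sup>2 < 1" using lY by (auto simp: abs_square_less_1)
  have "\<exists>R. \<forall>j k. k \<le> 2*r \<longrightarrow> \<bar>\<xi> j k\<bar> \<le> R"
  proof (rule finite_bound)
    fix k assume k: "k \<le> 2*r"
    consider "k < r" | "k = r" | "r < k" by linarith
    then show "\<exists>R. \<forall>j. \<bar>\<xi> j k\<bar> \<le> R"
    proof cases
      case 1 then show ?thesis by (auto simp: \<xi>_def)
    next
      case 2 then show ?thesis by (auto simp: \<xi>_def)
    next
      case 3
      define X where "X j = cY (y j) k - qY k" for j
      define Z where "Z j = (1 / mu r \<rho> k) ^ (n j) * X j" for j
      have Zb: "\<bar>Z j\<bar> \<le> (\<rho>\<^sup>2) ^ j * \<bar>X j\<bar>" for j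
      proof -
        have "\<bar>(1 / mu r \<rho> k) ^ (n j)\<bar> = \<bar>1 / mu r \<rho> k\<bar> ^ (n j)" by (simp add: power_abs)
        also have "\<dots> \<le> (\<rho>\<^sup>2) ^ (n j)" using mu_big[OF 3 k lY] by (intro power_mono) auto
        also have "\<dots> \<le> (\<rho>\<^sup>2) ^ j" using r2 n_ge[of j] by (intro power_decreasing) auto
        finally show ?thesis unfolding Z_def abs_mult by (intro mult_right_mono) auto
      qed
      have Xb: "\<bar>X j\<bar> \<le> (\<bar>cY y0 k\<bar> + \<bar>qY k\<bar> + \<bar>cY d k\<bar> * T1) + (\<bar>cY d k\<bar> * T2) * real j" for j
      proof -
        have "\<bar>X j\<bar> \<le> \<bar>cY y0 k\<bar> + \<bar>qY k\<bar> + \<bar>cY d k\<bar> * \<bar>t j\<bar>"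
          unfolding X_def cYy by (simp add: abs_mult[symmetric] mult.commute)
        also have "\<dots> \<le> \<bar>cY y0 k\<bar> + \<bar>qY k\<bar> + \<bar>cY d k\<bar> * (T1 + T2 * real j)"
          using tl[of j] by (intro add_left_mono mult_left_mono) auto
        finally show ?thesis by (simp add: algebra_simps)
      qed
      obtain R where R: "\<And>j. \<bar>Z j\<bar> \<le> R" using decay_bound[OF r2 Zb Xb] by blast
      have "\<bar>\<xi> j k\<bar> \<le> R + \<bar>qY k\<bar>" for j
      proof -
        have "\<xi> j k = Z j + qY k" using 3 k by (simp add: \<xi>_def Z_def X_def)
        then show ?thesis using R[of j] by (simp add: abs_triangle_ineq order_trans)
      qed
      then show ?thesis by blast
    qed
  qed
  then obtain R1 where R1: "\<And>j k. k \<le> 2*r \<Longrightarrow> \<bar>\<xi> j k\<bar> \<le> R1" by blast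
  have R1': "\<bar>\<xi> j k\<bar> \<le> \<bar>R1\<bar>" for j k
  proof (cases "k \<le> 2*r")
    case True then show ?thesis using R1[OF True, of j] by simp
  next
    case False then show ?thesis by (simp add: \<xi>_def)
  qed
  define v where "v j = (aff r u A ^^ m j) (y j)" for j
  have vV: "v j \<in> Vr r" for j unfolding v_def by (rule funpow_aff_Vr[OF u A yV])
  have vit: "cA (v j) k = mu r l k ^ m j * cA (y j) k + a k * (\<Sum>i<m j. mu r l k ^ i)" for j k
    using crd_iter[OF eA, where r=r and u=u and m="m j" and x="y j" and k=k] unfolding v_def a_def cA_def by simp
  have "\<exists>R. \<forall>j k. k \<le> 2*r \<longrightarrow> \<bar>cA (v j) k\<bar> \<le> R"
  proof (rule finite_bound)
    fix k assume k: "k \<le> 2*r"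
    consider "k < r" | "k = r" | "r < k" by linarith
    then show "\<exists>R. \<forall>j. \<bar>cA (v j) k\<bar> \<le> R"
    proof cases
      case 1
      have mn: "mu r l k \<noteq> 1" using 1 lA by (intro mu_ne1) auto
      define X where "X j = cA (y j) k - pA k" for j
      define Z where "Z j = mu r l k ^ m j * X j" for j
      have vZ: "cA (v j) k = pA k + Z j" for j
      proof -
        have "mu r l k ^ m j * pA k + a k * (\<Sum>i<m j. mu r l k ^ i) = pA k"
          unfolding pA_def by (rule geom_fix[OF mn])
        then show ?thesis unfolding vit Z_def X_def by (simp add: algebra_simps)
      qed
      have Zb: "\<bar>Z j\<bar> \<le> (l\<^sup>2) ^ j * \<bar>X j\<bar>" for j
      proof -
        have "\<bar>mu r l k ^ m j\<bar> = \<bar>mu r l k\<bar> ^ m j" by (simp add: power_abs)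
        also have "\<dots> \<le> (l\<^sup>2) ^ m j" using mu_small[OF 1 lA] by (intro power_mono) auto
        also have "\<dots> \<le> (l\<^sup>2) ^ j" using l2 m_ge[of j] by (intro power_decreasing) auto
        finally show ?thesis unfolding Z_def abs_mult by (intro mult_right_mono) auto
      qed
      have Xb: "\<bar>X j\<bar> \<le> (\<bar>cA y0 k\<bar> + \<bar>pA k\<bar> + \<bar>cA d k\<bar> * T1) + (\<bar>cA d k\<bar> * T2) * real j" for j
      proof -
        have "\<bar>X j\<bar> \<le> \<bar>cA y0 k\<bar> + \<bar>pA k\<bar> + \<bar>cA d k\<bar> * \<bar>t j\<bar>"
          unfolding X_def cAy by (simp add: abs_mult[symmetric] mult.commute)
        also have "\<dots> \<le> \<bar>cA y0 k\<bar> + \<bar>pA k\<bar> + \<bar>cA d k\<bar> * (T1 + T2 * real j)"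
          using tl[of j] by (intro add_left_mono mult_left_mono) auto
        finally show ?thesis by (simp add: algebra_simps)
      qed
      obtain R where R: "\<And>j. \<bar>Z j\<bar> \<le> R" using decay_bound[OF l2 Zb Xb] by blast
      have "\<bar>cA (v j) k\<bar> \<le> \<bar>pA k\<bar> + R" for j
        unfolding vZ using R[of j] by (simp add: abs_triangle_ineq order_trans)
      then show ?thesis by blast
    next
      case 2
      have vform: "cA (v j) k = (cA y0 r - cY y0 r * BA / BY) + a r * (real (m j) - \<theta> * real (n j))" for j
      proof -
        have "cA (v j) k = cA y0 r + t j * BA + a r * real (m j)"
          unfolding vit 2 cAy dAr by (simp add: mu_r[OF l0])
        moreover have "t j * BA = real (n j) * b r * BA / BY - cY y0 r * BA / BY"
          unfolding t_def using BY0 by (simp add: field_simps)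
        moreover have "a r * (\<theta> * real (n j)) = - (real (n j) * b r * BA / BY)"
          unfolding \<theta>_def using ar' BY0 by (simp add: field_simps)
        ultimately show ?thesis by (simp add: algebra_simps)
      qed
      then have "\<bar>cA (v j) k\<bar> \<le> \<bar>cA y0 r - cY y0 r * BA / BY\<bar> + \<bar>a r\<bar>" for j
      proof -
        have "\<bar>a r * (real (m j) - \<theta> * real (n j))\<bar> \<le> \<bar>a r\<bar> * 1"
          unfolding abs_mult using m_close[of j] by (intro mult_left_mono) auto
        then have h1: "\<bar>a r * (real (m j) - \<theta> * real (n j))\<bar> \<le> \<bar>a r\<bar>" by simp
        show ?thesis unfolding vform[of j] by (rule order_trans[OF abs_triangle_ineq]) (use h1 in simp)
      qed
      then show ?thesis by blast
    next
      case 3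
      have mn: "mu r l k \<noteq> 1" using 3 k lA by (intro mu_ne1) auto
      have "cA (y j) k = pA k" for j using cAy[of j k] y0A[OF 3 k] dA0[OF 3] by simp
      then have "cA (v j) k = pA k" for j unfolding vit pA_def using geom_fix[OF mn] by simp
      then show ?thesis by auto
    qed
  qed
  then obtain R2 where R2: "\<And>j k. k \<le> 2*r \<Longrightarrow> \<bar>cA (v j) k\<bar> \<le> R2" by blast
  have R2': "\<bar>cA (v j) k\<bar> \<le> \<bar>R2\<bar>" for j k
  proof (cases "k \<le> 2*r")
    case True then show ?thesis using R2[OF True, of j] by simp
  next
    case False then show ?thesis using crd_Vr[of r vm vp "v j"] by (simp add: cA_def Vr_def)
  qed
  obtain CY where CY: "CY \<ge> 0" "\<And>z R. (\<forall>i. \<bar>z i\<bar> \<le> R) \<Longrightarrow> (\<forall>k. \<bar>Lrep r (colmat wm wp) z k\<bar> \<le> CY * R)"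
    using Lrep_bound[of r "colmat wm wp"] by blast
  obtain CA where CA: "CA \<ge> 0" "\<And>z R. (\<forall>i. \<bar>z i\<bar> \<le> R) \<Longrightarrow> (\<forall>k. \<bar>Lrep r (colmat vm vp) z k\<bar> \<le> CA * R)"
    using Lrep_bound[of r "colmat vm vp"] by blast
  define R where "R = max (CY * \<bar>R1\<bar>) (CA * \<bar>R2\<bar>)"
  define K where "K = box r R"
  have xK: "x j \<in> K" for j
  proof -
    have "\<forall>k. \<bar>x j k\<bar> \<le> CY * \<bar>R1\<bar>" unfolding x_def by (rule CY(2)) (use R1' in blast)
    moreover have "CY * \<bar>R1\<bar> \<le> R" unfolding R_def by simp
    ultimately have "\<bar>x j k\<bar> \<le> R" for k using order_trans by blast
    then show ?thesis unfolding K_def using xV by (intro in_box) auto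
  qed
  have vK: "v j \<in> K" for j
  proof -
    have ve: "v j = Lrep r (colmat vm vp) (cA (v j))" unfolding cA_def by (rule Lrep_colmat_crd[OF DA vV, symmetric])
    have "\<forall>k. \<bar>Lrep r (colmat vm vp) (cA (v j)) k\<bar> \<le> CA * \<bar>R2\<bar>" by (rule CA(2)) (use R2' in blast)
    then have "\<forall>k. \<bar>v j k\<bar> \<le> CA * \<bar>R2\<bar>" using ve by simp
    moreover have "CA * \<bar>R2\<bar> \<le> R" unfolding R_def by simp
    ultimately have "\<bar>v j k\<bar> \<le> R" for k using order_trans by blast
    then show ?thesis unfolding K_def using vV by (intro in_box) auto
  qed
  have fin: "finite {g \<in> G. aff r u g ` K \<inter> K \<noteq> {}}"
  proof -
    have "compact K \<and> K \<subseteq> Vr r" unfolding K_def using box_compact box_Vr by simp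
    then show ?thesis using proper unfolding acts_properly_def by simp
  qed
  have sub: "range gg \<subseteq> {g \<in> G. aff r u g ` K \<inter> K \<noteq> {}}"
  proof
    fix g assume "g \<in> range gg"
    then obtain j where g: "g = gg j" by blast
    have "aff r u g (x j) \<in> aff r u g ` K" using xK[of j] by (rule imageI)
    moreover have "aff r u g (x j) \<in> K" using vK[of j] C2[of j] g by (simp add: v_def)
    ultimately have "aff r u g (x j) \<in> aff r u g ` K \<inter> K" by blast
    then show "g \<in> {g \<in> G. aff r u g ` K \<inter> K \<noteq> {}}" using ggG g by auto
  qed
  define c1 where "c1 = det2 wm vp / det2 vm vp"
  define c2 where "c2 = det2 vm wm / det2 vm vp"
  have wmd: "wm = c1 *\<^sub>R vm + c2 *\<^sub>R vp" unfolding c1_def c2_def by (rule decomp2[OF DA])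
  have evA: "A *v vp = l *\<^sub>R vp" "A *v vm = (1/l) *\<^sub>R vm" using eA by (simp_all add: eigd_def)
  have evY: "Y *v wm = (1/\<rho>) *\<^sub>R wm" using eY by (simp add: eigd_def)
  define h where "h j = (1/\<rho>) ^ (n j) * (1/l) ^ (m j)" for j
  have gw: "det2 (gg j *v wm) vp = h j * det2 wm vp" for j
  proof -
    have "gg j *v wm = pw A (m j) *v ((1/\<rho>) ^ (n j) *\<^sub>R wm)"
      unfolding gg_def by (simp add: matrix_vector_mul_assoc[symmetric] pw_mv[OF evY])
    also have "\<dots> = (1/\<rho>) ^ (n j) *\<^sub>R (pw A (m j) *v wm)" by (simp add: matrix_vector_mult_scaleR)
    also have "pw A (m j) *v wm = (c1 * (1/l) ^ m j) *\<^sub>R vm + (c2 * l ^ m j) *\<^sub>R vp"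
      by (subst wmd, subst mv_comb) (simp add: pw_mv[OF evA(1)] pw_mv[OF evA(2)])
    finally have "gg j *v wm = ((1/\<rho>) ^ (n j) * (c1 * (1/l) ^ m j)) *\<^sub>R vm + ((1/\<rho>) ^ (n j) * (c2 * l ^ m j)) *\<^sub>R vp"
      by (simp add: scaleR_add_right)
    then have "det2 (gg j *v wm) vp = ((1/\<rho>) ^ (n j) * (c1 * (1/l) ^ m j)) * det2 vm vp"
      by (simp add: det2_comb_l)
    then show ?thesis unfolding h_def c1_def using DA by simp
  qed
  have hmono: "\<bar>h j1\<bar> < \<bar>h j2\<bar>" if "j1 < j2" for j1 j2
  proof -
    have a1: "1 < \<bar>1/\<rho>\<bar>" "1 < \<bar>1/l\<bar>" using lA lY by auto
    have "\<bar>1/\<rho>\<bar> ^ n j1 < \<bar>1/\<rho>\<bar> ^ n j2" using n_mono[OF that] a1 by (intro power_strict_increasing)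
    moreover have "\<bar>1/l\<bar> ^ m j1 \<le> \<bar>1/l\<bar> ^ m j2" using m_mono[of j1 j2] that a1 by (intro power_increasing) auto
    ultimately have "\<bar>1/\<rho>\<bar> ^ n j1 * \<bar>1/l\<bar> ^ m j1 < \<bar>1/\<rho>\<bar> ^ n j2 * \<bar>1/l\<bar> ^ m j2"
      by (intro mult_less_le_imp_less) (use lA in auto)
    then show ?thesis by (simp add: h_def abs_mult power_abs)
  qed
  have "inj gg"
  proof (rule injI)
    fix j1 j2 assume eq: "gg j1 = gg j2"
    then have "h j1 * det2 wm vp = h j2 * det2 wm vp" using gw by metis
    then have "h j1 = h j2" using nd by simp
    show "j1 = j2"
    proof (rule ccontr)
      assume "j1 \<noteq> j2"
      then have "j1 < j2 \<or> j2 < j1" by arith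
      then show False
      proof
        assume "j1 < j2"
        then have "\<bar>h j1\<bar> < \<bar>h j2\<bar>" by (rule hmono)
        then show False using \<open>h j1 = h j2\<close> by simp
      next
        assume "j2 < j1"
        then have "\<bar>h j2\<bar> < \<bar>h j1\<bar>" by (rule hmono)
        then show False using \<open>h j1 = h j2\<close> by simp
      qed
    qed
  qed
  then have "infinite (range gg)" by (rule range_inj_infinite)
  then show False using fin sub finite_subset by blast
qed

lemma trace2: "trace (g::mat2) = g$1$1 + g$2$2"
  by (simp add: trace_def sum_2)

lemma inv_props:
  assumes "det (C::mat2) \<noteq> 0"
  shows "C ** matrix_inv C = mat 1" "matrix_inv C ** C = mat 1"
proof -
  define c1 :: "real^2" where "c1 = vector [C$1$1, C$2$1]"
  define c2 :: "real^2" where "c2 = vector [C$1$2, C$2$2]"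
  have Cc: "C = colmat c1 c2" by (rule mat2_eqI) (simp_all add: c1_def c2_def)
  have d: "det2 c1 c2 \<noteq> 0" using assms by (simp add: c1_def c2_def det2_def det_2 mult.commute)
  have "C ** invm c1 c2 = mat 1 \<and> invm c1 c2 ** C = mat 1"
    unfolding Cc using colmat_invm[OF d] invm_colmat[OF d] by simp
  then have "\<exists>A'. C ** A' = mat 1 \<and> A' ** C = mat 1" by blast
  then have "C ** matrix_inv C = mat 1 \<and> matrix_inv C ** C = mat 1"
    unfolding matrix_inv_def by (rule someI_ex)
  then show "C ** matrix_inv C = mat 1" "matrix_inv C ** C = mat 1" by auto
qed

lemma hyp_no_fix:
  assumes h: "hyperbolic c" and v: "c *v v = v"
  shows "v = 0"
proof -
  have det: "c$1$1 * c$2$2 - c$1$2 * c$2$1 = 1" using h by (simp add: hyperbolic_def SL2_def det_2)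
  have T: "\<bar>c$1$1 + c$2$2\<bar> > 2" using h by (simp add: hyperbolic_def trace2)
  have e1: "c$1$1 * v$1 + c$1$2 * v$2 = v$1" and e2: "c$2$1 * v$1 + c$2$2 * v$2 = v$2"
    using arg_cong[OF v, of "\<lambda>x. x$1"] arg_cong[OF v, of "\<lambda>x. x$2"] by simp_all
  have "(2 - (c$1$1 + c$2$2)) * v$1 = 0" using det e1 e2 by algebra
  moreover have "(2 - (c$1$1 + c$2$2)) * v$2 = 0" using det e1 e2 by algebra
  moreover have "2 - (c$1$1 + c$2$2) \<noteq> 0" using T by auto
  ultimately show ?thesis by (intro vec2_eqI) auto
qed

definition evec :: "mat2 \<Rightarrow> real \<Rightarrow> real^2" where
  "evec g \<nu> = (if g$1$2 \<noteq> 0 \<or> \<nu> \<noteq> g$1$1 then vector [g$1$2, \<nu> - g$1$1] else vector [\<nu> - g$2$2, g$2$1])"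

lemma evec_ok1:
  fixes g :: mat2
  assumes "g$2$1 * g$1$2 + g$2$2 * (\<nu> - g$1$1) = \<nu> * (\<nu> - g$1$1)"
  shows "g *v (vector [g$1$2, \<nu> - g$1$1] :: real^2) = \<nu> *\<^sub>R (vector [g$1$2, \<nu> - g$1$1] :: real^2)"
proof (rule vec2_eqI)
  show "(g *v (vector [g$1$2, \<nu> - g$1$1] :: real^2)) $ 1 = (\<nu> *\<^sub>R (vector [g$1$2, \<nu> - g$1$1] :: real^2)) $ 1"
    by (simp add: algebra_simps)
  show "(g *v (vector [g$1$2, \<nu> - g$1$1] :: real^2)) $ 2 = (\<nu> *\<^sub>R (vector [g$1$2, \<nu> - g$1$1] :: real^2)) $ 2"
    using assms by simp
qed

lemma evec_ok2:
  fixes g :: mat2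
  assumes "g$1$2 = 0"
  shows "g *v (vector [g$1$1 - g$2$2, g$2$1] :: real^2) = g$1$1 *\<^sub>R (vector [g$1$1 - g$2$2, g$2$1] :: real^2)"
proof (rule vec2_eqI)
  show "(g *v (vector [g$1$1 - g$2$2, g$2$1] :: real^2)) $ 1 = (g$1$1 *\<^sub>R (vector [g$1$1 - g$2$2, g$2$1] :: real^2)) $ 1"
    using assms by simp
  show "(g *v (vector [g$1$1 - g$2$2, g$2$1] :: real^2)) $ 2 = (g$1$1 *\<^sub>R (vector [g$1$1 - g$2$2, g$2$1] :: real^2)) $ 2"
    by (simp add: algebra_simps)
qed

lemma evec_ok:
  assumes h: "hyperbolic g" and root: "\<nu> * \<nu> - (g$1$1 + g$2$2) * \<nu> + 1 = 0"
  shows "g *v evec g \<nu> = \<nu> *\<^sub>R evec g \<nu> \<and> evec g \<nu> \<noteq> 0"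
proof -
  have det: "g$1$1 * g$2$2 - g$1$2 * g$2$1 = 1" using h by (simp add: hyperbolic_def SL2_def det_2)
  have T: "\<bar>g$1$1 + g$2$2\<bar> > 2" using h by (simp add: hyperbolic_def trace2)
  show ?thesis
  proof (cases "g$1$2 \<noteq> 0 \<or> \<nu> \<noteq> g$1$1")
    case True
    have ne: "(vector [g$1$2, \<nu> - g$1$1] :: real^2) \<noteq> 0"
      using True by (auto simp: vec_eq_iff forall_2)
    have "g$2$1 * g$1$2 + g$2$2 * (\<nu> - g$1$1) = \<nu> * (\<nu> - g$1$1)" using det root by algebra
    then have "g *v (vector [g$1$2, \<nu> - g$1$1] :: real^2) = \<nu> *\<^sub>R (vector [g$1$2, \<nu> - g$1$1] :: real^2)"
      by (rule evec_ok1)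
    then show ?thesis using True ne unfolding evec_def by simp
  next
    case False
    then have b: "g$1$2 = 0" "\<nu> = g$1$1" by auto
    have ad: "g$1$1 \<noteq> g$2$2"
    proof
      assume e: "g$1$1 = g$2$2"
      then have "g$1$1 * g$1$1 = 1" using det b by simp
      then have "g$1$1 = 1 \<or> g$1$1 = -1" by algebra
      then show False using T e by auto
    qed
    have ne: "(vector [g$1$1 - g$2$2, g$2$1] :: real^2) \<noteq> 0"
      using ad by (auto simp: vec_eq_iff forall_2)
    show ?thesis using False ne b evec_ok2[OF b(1)] unfolding evec_def by simp
  qed
qed

lemma hyp_eigd:
  assumes h: "hyperbolic g"
  shows "\<exists>l vm vp. eigd g l vm vp"
proof -
  define T where "T = g$1$1 + g$2$2"
  have T: "\<bar>T\<bar> > 2" using h by (simp add: hyperbolic_def trace2 T_def)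
  define s where "s = sqrt (T\<^sup>2 - 4)"
  have T4: "T\<^sup>2 - 4 > 0"
  proof -
    have "2 * 2 < \<bar>T\<bar> * \<bar>T\<bar>" using T by (intro mult_strict_mono) auto
    then show ?thesis by (simp add: power2_eq_square)
  qed
  have s2: "s\<^sup>2 = T\<^sup>2 - 4" "s > 0" using T4 by (simp_all add: s_def)
  define l where "l = (if T > 2 then (T - s) / 2 else (T + s) / 2)"
  have ss: "s * s = T * T - 4" using s2(1) by (simp add: power2_eq_square)
  have "2 * l = T - s \<or> 2 * l = T + s" by (simp add: l_def)
  then have root: "l * l - T * l + 1 = 0"
  proof
    assume "2 * l = T - s" then show ?thesis using ss by algebra
  next
    assume "2 * l = T + s" then show ?thesis using ss by algebra
  qed
  have lb: "0 < \<bar>l\<bar> \<and> \<bar>l\<bar> < 1"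
  proof (cases "T > 2")
    case True
    have a: "s\<^sup>2 < T\<^sup>2" using s2(1) by simp
    have "s < T" by (rule power2_less_imp_less[OF a]) (use True in simp)
    moreover have b: "(T - 2)\<^sup>2 < s\<^sup>2" unfolding s2(1) using True by (simp add: power2_eq_square algebra_simps)
    have "T - 2 < s" by (rule power2_less_imp_less[OF b]) (use s2(2) in simp)
    ultimately have "0 < (T - s) / 2" "(T - s) / 2 < 1" by simp_all
    then show ?thesis using True by (simp add: l_def)
  next
    case False
    then have Tn: "T < -2" using T by auto
    have a: "s\<^sup>2 < (- T)\<^sup>2" using s2(1) by simp
    have "s < - T" by (rule power2_less_imp_less[OF a]) (use Tn in simp)
    moreover have b: "(- T - 2)\<^sup>2 < s\<^sup>2" unfolding s2(1) using Tn by (simp add: power2_eq_square algebra_simps)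
    have "- T - 2 < s" by (rule power2_less_imp_less[OF b]) (use s2(2) in simp)
    ultimately have "(T + s) / 2 < 0" "-1 < (T + s) / 2" by simp_all
    then show ?thesis using False by (simp add: l_def)
  qed
  have l0: "l \<noteq> 0" using lb by auto
  have root': "(1/l) * (1/l) - T * (1/l) + 1 = 0"
  proof -
    have "(1/l) * (1/l) - T * (1/l) + 1 = (l * l - T * l + 1) / (l * l)" using l0 by (simp add: field_simps)
    then show ?thesis using root by simp
  qed
  have ll: "l \<noteq> 1/l"
  proof
    assume "l = 1/l"
    then have "l * l = 1" using l0 by (simp add: field_simps)
    then have "\<bar>l\<bar> * \<bar>l\<bar> = 1" by (simp add: abs_mult[symmetric])
    moreover have "\<bar>l\<bar> * \<bar>l\<bar> < 1 * 1" using lb by (intro mult_strict_mono) auto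
    ultimately show False by simp
  qed
  define vp where "vp = evec g l"
  define vm0 where "vm0 = evec g (1/l)"
  have evp: "g *v vp = l *\<^sub>R vp" "vp \<noteq> 0" using evec_ok[OF h, of l] root by (simp_all add: vp_def T_def)
  have evm: "g *v vm0 = (1/l) *\<^sub>R vm0" "vm0 \<noteq> 0" using evec_ok[OF h, of "1/l"] root' by (simp_all add: vm0_def T_def)
  have dnz: "det2 vm0 vp \<noteq> 0"
  proof
    assume "det2 vm0 vp = 0"
    then obtain c where c: "vm0 = c *\<^sub>R vp" using det2_par evp(2) by blast
    have "g *v vm0 = l *\<^sub>R vm0" using c evp(1) by (simp add: matrix_vector_mult_scaleR)
    then have "(1/l) *\<^sub>R vm0 = l *\<^sub>R vm0" using evm(1) by simp
    then have "(1/l - l) *\<^sub>R vm0 = 0" by (simp add: scaleR_diff_left)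
    then show False using evm(2) ll by simp
  qed
  define vm where "vm = (if det2 vm0 vp > 0 then vm0 else - vm0)"
  have neg: "g *v (- vm0) = (1/l) *\<^sub>R (- vm0)"
  proof -
    have "g *v (- vm0) = g *v ((-1) *\<^sub>R vm0)" by simp
    also have "\<dots> = (-1) *\<^sub>R (g *v vm0)" by (rule matrix_vector_mult_scaleR)
    also have "\<dots> = (1/l) *\<^sub>R (- vm0)" using evm(1) by simp
    finally show ?thesis .
  qed
  have "g *v vm = (1/l) *\<^sub>R vm" using evm(1) neg by (simp add: vm_def)
  moreover have "det2 vm vp > 0" using dnz by (auto simp: vm_def det2_def)
  ultimately have "eigd g l vm vp" using lb evp by (simp add: eigd_def)
  then show ?thesis by blast
qed

lemma conj_eigd:
  assumes C: "det C = 1" and e: "eigd B \<rho> wm wp"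
  shows "eigd (C ** B ** matrix_inv C) \<rho> (C *v wm) (C *v wp)"
proof -
  have CiC: "matrix_inv C ** C = mat 1" using inv_props C by simp
  have "(C ** B ** matrix_inv C) *v (C *v x) = C *v (B *v x)" for x
    by (simp add: matrix_vector_mul_assoc matrix_mul_assoc[symmetric] CiC)
  moreover have "det2 (C *v wm) (C *v wp) = det2 wm wp" using C by (simp add: det2_mv)
  ultimately show ?thesis using e by (simp add: eigd_def matrix_vector_mult_scaleR)
qed

lemma colmat_conj: "colmat (C *v v) (C *v w) = C ** colmat v w"
  by (rule mat2_eqI) simp_all

lemma invm_conj:
  assumes C: "det C = 1" and D: "det2 v w \<noteq> 0"
  shows "invm (C *v v) (C *v w) ** C = invm v w"
proof -
  have D': "det2 (C *v v) (C *v w) \<noteq> 0" using C D by (simp add: det2_mv)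
  have "invm (C *v v) (C *v w) ** C = invm (C *v v) (C *v w) ** C ** (colmat v w ** invm v w)"
    using D by (simp add: colmat_invm)
  also have "\<dots> = (invm (C *v v) (C *v w) ** colmat (C *v v) (C *v w)) ** invm v w"
    by (simp add: colmat_conj matrix_mul_assoc)
  also have "\<dots> = invm v w" using D' by (simp add: invm_colmat)
  finally show ?thesis .
qed

lemma conj_sign:
  assumes G: "psl_subgroup G" and u: "cocycle r G u" and C: "C \<in> G" and B: "B \<in> G"
    and e: "eigd B \<rho> wm wp"
  shows "crd r (C *v wm) (C *v wp) (u (C ** B ** matrix_inv C)) r = crd r wm wp (u B) r"
proof -
  define Ci where "Ci = matrix_inv C"
  have Ci: "Ci \<in> G" using psl_props(4)[OF G C] by (simp add: Ci_def)
  have dC: "det C = 1" using psl_props(1)[OF G C] .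
  have dB: "det B \<noteq> 0" using psl_props(1)[OF G B] by simp
  have D: "det2 wm wp \<noteq> 0" using e by (simp add: eigd_def)
  have CCi: "C ** Ci = mat 1" using inv_props dC by (simp add: Ci_def)
  have CB: "C ** B \<in> G" using psl_props(3)[OF G C B] .
  have uV: "\<And>g. g \<in> G \<Longrightarrow> u g \<in> Vr r" using u by (simp add: cocycle_def)
  have coc: "\<And>g h. g \<in> G \<Longrightarrow> h \<in> G \<Longrightarrow> u (g ** h) = (\<lambda>k. u g k + Lrep r g (u h) k)"
    using u by (simp add: cocycle_def)
  define u' where "u' = u Ci"
  have "u (mat 1) = (\<lambda>k. u C k + Lrep r C u' k)" using coc[OF C Ci] CCi by (simp add: u'_def)
  then have uC: "u C = (\<lambda>k. - Lrep r C u' k)" using u_id[OF G u] by (simp add: fun_eq_iff eq_neg_iff_add_eq_0)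
  define w where "w = (\<lambda>k. u B k + Lrep r B u' k - u' k)"
  have uY: "u (C ** B ** Ci) = Lrep r C w"
  proof -
    have "u (C ** B ** Ci) = (\<lambda>k. u (C ** B) k + Lrep r (C ** B) u' k)" using coc[OF CB Ci] by (simp add: u'_def)
    also have "\<dots> = (\<lambda>k. - Lrep r C u' k + Lrep r C (u B) k + Lrep r C (Lrep r B u') k)"
      using coc[OF C B] uC Lrep_mult[of C r B u'] dC by simp
    also have "\<dots> = Lrep r C w" unfolding w_def by (simp add: Lrep_add Lrep_diff algebra_simps)
    finally show ?thesis .
  qed
  have "crd r (C *v wm) (C *v wp) (Lrep r C w) = crd r wm wp w"
  proof -
    have D': "det2 (C *v wm) (C *v wp) \<noteq> 0" using D dC by (simp add: det2_mv)
    show ?thesis unfolding crd_def Lrep_mult[OF det_invm_nz[OF D']] invm_conj[OF dC D] ..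
  qed
  moreover have "crd r wm wp w r = crd r wm wp (u B) r"
  proof -
    have "crd r wm wp w = (\<lambda>k. crd r wm wp (u B) k + crd r wm wp (Lrep r B u') k - crd r wm wp u' k)"
      unfolding w_def by (simp add: crd_def Lrep_add Lrep_diff)
    moreover have "crd r wm wp (Lrep r B u') r = crd r wm wp u' r"
      using crd_Lrep[OF e] e mu_r[of \<rho> r] by (simp add: eigd_def)
    ultimately show ?thesis by simp
  qed
  ultimately show ?thesis using uY by (simp add: Ci_def)
qed

lemma inv_cancel:
  assumes "det (M::mat2) \<noteq> 0"
  shows "matrix_inv M ** (M ** X) = X" "M ** (matrix_inv M ** X) = X"
  using inv_props[OF assms] by (simp_all add: matrix_mul_assoc)

lemma eig_of_inv:
  assumes "det (M::mat2) \<noteq> 0" "M *v v = c *\<^sub>R v" "matrix_inv M *v v = c' *\<^sub>R v" "v \<noteq> 0"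
  shows "c * c' = 1"
proof -
  have "v = (M ** matrix_inv M) *v v" using inv_props[OF assms(1)] by simp
  also have "\<dots> = M *v (c' *\<^sub>R v)" using assms(3) by (simp add: matrix_vector_mul_assoc[symmetric])
  also have "\<dots> = (c * c') *\<^sub>R v" using assms(2) by (simp add: matrix_vector_mult_scaleR)
  finally have "(1 - c * c') *\<^sub>R v = 0" by (simp add: scaleR_diff_left)
  then show ?thesis using assms(4) by simp
qed

lemma exists_moving:
  assumes S: "schottky G" and v: "v \<noteq> 0"
  shows "\<exists>C\<in>G. det2 (C *v v) v \<noteq> 0"
proof (rule ccontr)
  assume "\<not> ?thesis"
  then have allp: "\<And>C. C \<in> G \<Longrightarrow> det2 (C *v v) v = 0" by blast
  have G: "psl_subgroup G" using S by (simp add: schottky_def)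
  obtain a b where a: "a \<in> G" and b: "b \<in> G" and ab: "a ** b \<noteq> b ** a"
    using S unfolding schottky_def by blast
  have hyp: "\<And>g. g \<in> G \<Longrightarrow> g \<noteq> mat 1 \<Longrightarrow> g \<noteq> - mat 1 \<Longrightarrow> hyperbolic g"
    using S unfolding schottky_def by blast
  have ev: "\<And>C. C \<in> G \<Longrightarrow> \<exists>c. C *v v = c *\<^sub>R v" using allp det2_par v by blast
  define ai where "ai = matrix_inv a"
  define bi where "bi = matrix_inv b"
  have ai: "ai \<in> G" and bi: "bi \<in> G" using psl_props(4)[OF G] a b by (simp_all add: ai_def bi_def)
  have da: "det a \<noteq> 0" and db: "det b \<noteq> 0" using psl_props(1)[OF G] a b by auto
  obtain ca where ca: "a *v v = ca *\<^sub>R v" using ev[OF a] by blast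
  obtain cb where cb: "b *v v = cb *\<^sub>R v" using ev[OF b] by blast
  obtain cai where cai: "ai *v v = cai *\<^sub>R v" using ev[OF ai] by blast
  obtain cbi where cbi: "bi *v v = cbi *\<^sub>R v" using ev[OF bi] by blast
  have p1: "ca * cai = 1" using eig_of_inv[OF da ca _ v] cai by (simp add: ai_def)
  have p2: "cb * cbi = 1" using eig_of_inv[OF db cb _ v] cbi by (simp add: bi_def)
  define c where "c = a ** b ** ai ** bi"
  have cG: "c \<in> G" unfolding c_def using psl_props(3)[OF G] a b ai bi by blast
  have cv: "c *v v = v"
  proof -
    have "c *v v = a *v (b *v (ai *v (bi *v v)))" by (simp add: c_def matrix_vector_mul_assoc matrix_mul_assoc)
    also have "\<dots> = ((ca * cb) * (cai * cbi)) *\<^sub>R v"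
      by (simp add: cbi cai cb ca matrix_vector_mult_scaleR ac_simps)
    also have "(ca * cb) * (cai * cbi) = (ca * cai) * (cb * cbi)" by (simp add: ac_simps)
    finally show ?thesis using p1 p2 by simp
  qed
  show False
  proof (cases "c = mat 1")
    case True
    have "c ** (b ** a) = a ** b"
      unfolding c_def ai_def bi_def by (simp add: matrix_mul_assoc[symmetric] inv_cancel[OF db] inv_props(2)[OF da])
    then show False using True ab by simp
  next
    case False
    show False
    proof (cases "c = - mat 1")
      case True
      then have "c *v v = - v" by (simp add: matrix_vector_mult_def vec_eq_iff forall_2 sum_2 mat_def)
      then have "v = - v" using cv by simp
      then have "v + v = 0" by (metis add.right_inverse)
      then have "(2::real) *\<^sub>R v = 0" by (simp add: scaleR_2)
      then show False using v by simp
    next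
      case False
      then have "hyperbolic c" using hyp cG \<open>c \<noteq> mat 1\<close> by blast
      then show False using hyp_no_fix cv v by blast
    qed
  qed
qed

lemma sign_of_margulis:
  assumes e: "eigd g l vm vp" and ug: "u g \<in> Vr r"
  shows "margulis r u g < 0 \<longleftrightarrow> crd r vm vp (u g) r < 0"
    "margulis r u g > 0 \<longleftrightarrow> crd r vm vp (u g) r > 0"
proof -
  have D: "det2 vm vp \<noteq> 0" using e by (simp add: eigd_def)
  have sp: "sqrt (Bform r (Ev r r vm vp) (Ev r r vm vp)) > 0" using BEE_pos[OF D] by simp
  show "margulis r u g < 0 \<longleftrightarrow> crd r vm vp (u g) r < 0"
    unfolding margulis_eq[where u=u and r=r, OF e ug] using sp by (simp add: mult_less_0_iff)
  show "margulis r u g > 0 \<longleftrightarrow> crd r vm vp (u g) r > 0"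
    unfolding margulis_eq[where u=u and r=r, OF e ug] using sp by (simp add: zero_less_mult_iff)
qed

theorem mainTheorem4:
  fixes r :: nat and G :: "(real^2^2) set" and u :: "real^2^2 \<Rightarrow> (nat \<Rightarrow> real)"
  assumes "r \<ge> 1"
    and "schottky G"
    and "cocycle r G u"
    and "\<exists>g1\<in>G. \<exists>g2\<in>G. hyperbolic g1 \<and> hyperbolic g2 \<and>
            margulis r u g1 < 0 \<and> 0 < margulis r u g2"
  shows "\<not> acts_properly r G u"
proof -
  have G: "psl_subgroup G" using assms(2) by (simp add: schottky_def)
  have u: "cocycle r G u" by (rule assms(3))
  obtain g1 g2 where g1: "g1 \<in> G" and g2: "g2 \<in> G" and h1: "hyperbolic g1" and h2: "hyperbolic g2"
    and m1: "margulis r u g1 < 0" and m2: "0 < margulis r u g2"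
    using assms(4) by blast
  obtain l vm vp where eA: "eigd g1 l vm vp" using hyp_eigd[OF h1] by blast
  obtain \<rho> wm wp where eB: "eigd g2 \<rho> wm wp" using hyp_eigd[OF h2] by blast
  have uV: "\<And>g. g \<in> G \<Longrightarrow> u g \<in> Vr r" using u by (simp add: cocycle_def)
  have ar: "crd r vm vp (u g1) r < 0" using sign_of_margulis(1)[where u=u and r=r, OF eA uV[OF g1]] m1 by simp
  have br: "crd r wm wp (u g2) r > 0" using sign_of_margulis(2)[where u=u and r=r, OF eB uV[OF g2]] m2 by simp
  show ?thesis
  proof (cases "det2 wm vp = 0")
    case False
    show ?thesis by (rule core[OF G u g1 g2 eA eB False ar br])
  next
    case True
    have vp0: "vp \<noteq> 0" using eA by (auto simp: eigd_def det2_def)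
    have wm0: "wm \<noteq> 0" using eB by (auto simp: eigd_def det2_def)
    obtain C where C: "C \<in> G" and Cv: "det2 (C *v vp) vp \<noteq> 0" using exists_moving[OF assms(2) vp0] by blast
    have dC: "det C = 1" using psl_props(1)[OF G C] .
    define Y where "Y = C ** g2 ** matrix_inv C"
    have YG: "Y \<in> G" unfolding Y_def using psl_props(3,4)[OF G] C g2 by blast
    have eY: "eigd Y \<rho> (C *v wm) (C *v wp)" unfolding Y_def by (rule conj_eigd[OF dC eB])
    have bY: "crd r (C *v wm) (C *v wp) (u Y) r > 0"
      unfolding Y_def conj_sign[OF G u C g2 eB] by (rule br)
    obtain c where c: "wm = c *\<^sub>R vp" using det2_par[OF True vp0] by blast
    have c0: "c \<noteq> 0" using c wm0 by auto
    have "det2 (C *v wm) vp = c * det2 (C *v vp) vp"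
      unfolding c by (simp add: matrix_vector_mult_scaleR det2_def algebra_simps)
    then have nd: "det2 (C *v wm) vp \<noteq> 0" using c0 Cv by simp
    show ?thesis by (rule core[OF G u g1 YG eA eY nd ar bY])
  qed
qed


end
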